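(* Fix $d$ with $d^*\le d\le d_{\max}$ (i.e. the null hypothesis $H_{0,d}:\mathcal{L}_d=\mathcal{L}_{d_{\max}}$ holds) and fix $\tau\in[0,1)$. Assume Conditions (C1)–(C3). Then, as $n\to\infty$, \[ \{n/(2-\tau)\}^{1/2}\,\widehat{\psi}_d \rightsquigarrow \mathcal{N}(0,\nu_d^2),\qquad \nu_d^2=2(1-\tau)\sigma_{d^*}^2,\quad \sigma_{d^*}^2=\mathrm{var}_{\mathbb{P}}\{\ell(Y,g_{d^*}(R))\}. \]
   Context: Population setup. Let $(X,Y)$ have law $\mathbb{Q}$ on $\mathcal{X}\times\mathcal{Y}$. Let $R\in\mathbb{R}^{d_{\max}}$ be an unobserved random vector on the same probability space (an oracle representation, zero-padded to dimension $d_{\max}$), and let $\mathbb{P}$ be the joint law of $Z=(R,X,Y)$. Let $\widehat{\mathcal{Y}}$ be a normed prediction space, $\ell:\mathcal{Y}\times\widehat{\mathcal{Y}}\to\mathbb{R}$ a loss, $\mathcal{G}$ a class of measurable maps $\mathbb{R}^{d_{\max}}\to\widehat{\mathcal{Y}}$, and for $0\le d\le d_{\max}$, $\mathcal{G}_d=\{g\in\mathcal{G}:g(r)=g(r')\text{ whenever } r_{[d]}=r'_{[d]}\}$ where $r_{[d]}$ is the vector of the first $d$ coordinates. Let $\mathcal{L}(g,\mathbb{P})=\mathbb{E}_{\mathbb{P}}\{\ell(Y,g(R))\}$, $\mathcal{L}_d=\min_{g\in\mathcal{G}_d}\mathcal{L}(g,\mathbb{P})$ (attained) with a minimizer $g_d\in\mathcal{G}_d$,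 and $d^*=\min\{0\le d\le d_{\max}:\mathcal{L}_d=\mathcal{L}_{d_{\max}}\}$. Since $\mathcal{G}_0\subseteq\cdots\subseteq\mathcal{G}_{d_{\max}}$, $\mathcal{L}_d=\mathcal{L}_{d_{\max}}$ iff $d\ge d^*$. Procedure. Observe $(X_i,Y_i)$, $i\in[n]$, i.i.d. from $\mathbb{Q}$, with unobserved $R_i$ such that $Z_i=(R_i,X_i,Y_i)$ are i.i.d. $\mathbb{P}$. Fix $K\ge2$ and $\tau\in[0,1)$ (both fixed as $n\to\infty$). Partition $[n]$ into folds $I_1,\dots,I_K$ of (asymptotically) equal size; $I_{-k}=[n]\setminus I_k$. For each $k$, using only data indexed by $I_{-k}$, compute a reduction map $\widehat\varphi_{-k}:\mathcal{X}\to\mathbb{R}^{d_{\max}}$ and, for each $d$, a prediction rule $\widehat g_{-k;d}\in\mathcal{G}_d$. Split $I_k$ into disjoint $I_{k,a},I_{k,b},I_{k,o}$ with $|I_{k,a}|=|I_{k,b}|$ and $|I_{k,o}|/(|I_{k,a}|+|I_{k,o}|)=\tau$. For $J\in\{a,b,o\}$ and $g\in\mathcal{G}$ put $\widehat{\mathcal{L}}_{-k}(g,\widehat{\mathbb{Q}}_{k,J})=|I_{k,J}|^{-1}\sum_{i\in I_{k,J}}\ell(Y_i,g(\widehat\varphi_{-k}(X_i)))$, and analogously $\widehat{\mathcal{L}}_{-k}(g,\widehat{\mathbb{Q}}_k)$ averaging over $I_k$. Define $\widehat{\mathcal{L}}_{d,k}=\tau\widehat{\mathcal{L}}_{-k}(\widehat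 g_{-k;d},\widehat{\mathbb{Q}}_{k,o})+(1-\tau)\widehat{\mathcal{L}}_{-k}(\widehat g_{-k;d},\widehat{\mathbb{Q}}_{k,a})$, $\widehat{\mathcal{L}}_{d_{\max},k}=\tau\widehat{\mathcal{L}}_{-k}(\widehat g_{-k;d_{\max}},\widehat{\mathbb{Q}}_{k,o})+(1-\tau)\widehat{\mathcal{L}}_{-k}(\widehat g_{-k;d_{\max}},\widehat{\mathbb{Q}}_{k,b})$, and $\widehat\psi_d=K^{-1}\sum_{k=1}^K(\widehat{\mathcal{L}}_{d,k}-\widehat{\mathcal{L}}_{d_{\max},k})$. Norm and conditions. For a measurable $h:\mathrm{supp}(\mathbb{P})\to\widehat{\mathcal{Y}}$, $\|h\|$ denotes a fixed norm such as $\|h\|_{L_2(\mathbb{P})}=(\int\|h(z)\|_{\widehat{\mathcal{Y}}}^2\,d\mathbb{P}(z))^{1/2}$ or $\|h\|_{L_\infty(\mathbb{P})}$; a composite $g\circ\varphi$ ($\varphi:\mathcal{X}\to\mathbb{R}^{d_{\max}}$, $g\in\mathcal{G}$) is viewed as $z=(r,x,y)\mapsto g(\varphi(x))$ and $g_{d^*}$ as $z\mapsto g_{d^*}(r)$; norms and expectations of trained objects are computed treating them as fixed (conditionally on the training data). (C1) For each $d\ge d^*$ there is $C>0$ such that for any sequence $(\varphi^{(j)},g^{(j)})$ with $\varphi^{(j)}:\mathcal{X}\to\mathbb{R}^{d_{\max}}$, $g^{(j)}\in\mathcal{G}_d$ and $\|g^{(j)}\circ\varphi^{(j)}-g_{d^*}\|\to0$,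 for all large $j$: $|\mathbb{E}_{\mathbb{P}}\{\ell(Y,g^{(j)}\circ\varphi^{(j)}(X))-\ell(Y,g_{d^*}(R))\}|\le C\|g^{(j)}\circ\varphi^{(j)}-g_{d^*}\|^2$. (C2) For each $d\ge d^*$ and each $k$, $\|\widehat g_{-k;d}\circ\widehat\varphi_{-k}-g_{d^*}\|=o_{\mathbb{P}}(n^{-1/4})$. (C3) For each $d\ge d^*$ and each $k$, $\mathbb{E}_{\mathbb{P}}[\{\ell(Y,\widehat g_{-k;d}\circ\widehat\varphi_{-k}(X))-\ell(Y,g_{d^*}(R))\}^2\mid \widehat g_{-k;d},\widehat\varphi_{-k}]=o_{\mathbb{P}}(1)$. *)

theory Defs
  imports "HOL-Probability.Probability"
begin

text \<open>Oracle representations in R^{d_max} are encoded as functions nat => real;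
  a map on R^{d_max} is a map on nat => real depending only on the first d_max coordinates.\<close>

definition MR :: "(nat \<Rightarrow> real) measure" where
  "MR = PiM UNIV (\<lambda>_. (borel :: real measure))"

definition Gd :: "((nat \<Rightarrow> real) \<Rightarrow> 'b) set \<Rightarrow> nat \<Rightarrow> ((nat \<Rightarrow> real) \<Rightarrow> 'b) set" where
  "Gd G d = {g \<in> G. \<forall>r r'. (\<forall>j<d. r j = r' j) \<longrightarrow> g r = g r'}"

text \<open>Population risk L(g,P) = E_P l(Y, g(R)), with Z = (R, X, Y).\<close>
definition risk :: "((nat \<Rightarrow> real) \<times> 'x \<times> 'y) measure \<Rightarrow> ('y \<Rightarrow> 'b \<Rightarrow> real)
    \<Rightarrow> ((nat \<Rightarrow> real) \<Rightarrow> 'b) \<Rightarrow> real" where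
  "risk P l g = (\<integral>z. l (snd (snd z)) (g (fst z)) \<partial>P)"

definition Lmin :: "((nat \<Rightarrow> real) \<times> 'x \<times> 'y) measure \<Rightarrow> ('y \<Rightarrow> 'b \<Rightarrow> real)
    \<Rightarrow> ((nat \<Rightarrow> real) \<Rightarrow> 'b) set \<Rightarrow> nat \<Rightarrow> real" where
  "Lmin P l G d = (INF g\<in>Gd G d. risk P l g)"

definition dstar :: "((nat \<Rightarrow> real) \<times> 'x \<times> 'y) measure \<Rightarrow> ('y \<Rightarrow> 'b \<Rightarrow> real)
    \<Rightarrow> ((nat \<Rightarrow> real) \<Rightarrow> 'b) set \<Rightarrow> nat \<Rightarrow> nat" where
  "dstar P l G dmax = (LEAST d. Lmin P l G d = Lmin P l G dmax)"

definition small_oP :: "'a measure \<Rightarrow> (nat \<Rightarrow> 'a \<Rightarrow> real) \<Rightarrow> (nat \<Rightarrow> real) \<Rightarrow> bool" where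
  "small_oP M W r \<longleftrightarrow> (\<forall>n. W n \<in> borel_measurable M) \<and>
     (\<forall>e>0. (\<lambda>n. measure M {\<omega> \<in> space M. \<bar>W n \<omega>\<bar> > e * r n}) \<longlonglongrightarrow> 0)"

definition small_oP1_enn :: "'a measure \<Rightarrow> (nat \<Rightarrow> 'a \<Rightarrow> ennreal) \<Rightarrow> bool" where
  "small_oP1_enn M W \<longleftrightarrow> (\<forall>n. W n \<in> borel_measurable M) \<and>
     (\<forall>e>0. (\<lambda>n. measure M {\<omega> \<in> space M. W n \<omega> > ennreal e}) \<longlonglongrightarrow> 0)"

definition emp_loss :: "('y \<Rightarrow> 'b \<Rightarrow> real) \<Rightarrow> ('x \<Rightarrow> nat \<Rightarrow> real) \<Rightarrow> ((nat \<Rightarrow> real) \<Rightarrow> 'b)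
    \<Rightarrow> (nat \<Rightarrow> 'x \<times> 'y) \<Rightarrow> nat set \<Rightarrow> real" where
  "emp_loss l ph g D J = (\<Sum>i\<in>J. l (snd (D i)) (g (ph (fst (D i))))) / real (card J)"

definition gauss0 :: "real \<Rightarrow> real measure" where
  "gauss0 v = (if v > 0 then density lborel (normal_density 0 (sqrt v)) else return borel 0)"

end

theory Submission
  imports Defs
begin

definition oP :: "'a measure \<Rightarrow> (nat \<Rightarrow> 'a \<Rightarrow> real) \<Rightarrow> bool" where
  "oP M W \<longleftrightarrow> (\<forall>n. W n \<in> borel_measurable M) \<and>
     (\<forall>e>0. (\<lambda>n. measure M {\<omega>\<in>space M. e < \<bar>W n \<omega>\<bar>}) \<longlonglongrightarrow> 0)"

lemma oP_I:
  assumes meas: "\<And>n. W n \<in> borel_measurable M"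
  assumes ev: "\<And>e \<eta>. e > 0 \<Longrightarrow> \<eta> > 0 \<Longrightarrow>
     eventually (\<lambda>n. measure M {\<omega>\<in>space M. e < \<bar>W n \<omega>\<bar>} \<le> \<eta>) sequentially"
  shows "oP M W"
  unfolding oP_def
proof (intro conjI allI impI meas)
  fix e :: real assume e: "e > 0"
  show "(\<lambda>n. measure M {\<omega>\<in>space M. e < \<bar>W n \<omega>\<bar>}) \<longlonglongrightarrow> 0"
  proof (rule tendstoI)
    fix \<eta> :: real assume "\<eta> > 0"
    then have "\<eta>/2 > 0" by simp
    from ev[OF e this] show "eventually (\<lambda>n. dist (measure M {\<omega>\<in>space M. e < \<bar>W n \<omega>\<bar>}) 0 < \<eta>) sequentially"
      by eventually_elim (use \<open>\<eta> > 0\<close> in \<open>auto simp: dist_real_def\<close>)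
  qed
qed

lemma oP_meas: "oP M W \<Longrightarrow> W n \<in> borel_measurable M"
  unfolding oP_def by auto

lemma oP_ev: "oP M W \<Longrightarrow> e > 0 \<Longrightarrow> \<eta> > 0 \<Longrightarrow>
   eventually (\<lambda>n. measure M {\<omega>\<in>space M. e < \<bar>W n \<omega>\<bar>} < \<eta>) sequentially"
  unfolding oP_def
  by (auto dest!: spec[of _ e] dest: order_tendstoD(2)[of _ 0 _ \<eta>])

lemma oP_zero: "oP M (\<lambda>n \<omega>. 0)"
  by (rule oP_I) auto

lemma oP_cong:
  assumes "oP M W" "\<And>n \<omega>. \<omega> \<in> space M \<Longrightarrow> W n \<omega> = V n \<omega>"
  shows "oP M V"
proof -
  have "V n \<in> borel_measurable M" for n
    using oP_meas[OF assms(1)] measurable_cong[of M "W n" "V n"] assms(2) by metis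
  moreover have "{\<omega>\<in>space M. e < \<bar>W n \<omega>\<bar>} = {\<omega>\<in>space M. e < \<bar>V n \<omega>\<bar>}" for e n
    using assms(2) by auto
  ultimately show ?thesis using assms(1) unfolding oP_def by simp
qed

lemma oP_add:
  assumes "finite_measure M" "oP M A" "oP M B"
  shows "oP M (\<lambda>n \<omega>. A n \<omega> + B n \<omega>)"
proof (rule oP_I)
  interpret finite_measure M by fact
  have [measurable]: "A n \<in> borel_measurable M" "B n \<in> borel_measurable M" for n
    using assms oP_meas by auto
  show "(\<lambda>\<omega>. A n \<omega> + B n \<omega>) \<in> borel_measurable M" for n by simp
  fix e \<eta> :: real assume e: "e > 0" and \<eta>: "\<eta> > 0"
  have "eventually (\<lambda>n. measure M {\<omega>\<in>space M. e/2 < \<bar>A n \<omega>\<bar>} < \<eta>/2) sequentially"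
    by (rule oP_ev[OF assms(2)]) (use e \<eta> in auto)
  moreover have "eventually (\<lambda>n. measure M {\<omega>\<in>space M. e/2 < \<bar>B n \<omega>\<bar>} < \<eta>/2) sequentially"
    by (rule oP_ev[OF assms(3)]) (use e \<eta> in auto)
  ultimately show "eventually (\<lambda>n. measure M {\<omega>\<in>space M. e < \<bar>A n \<omega> + B n \<omega>\<bar>} \<le> \<eta>) sequentially"
  proof eventually_elim
    case (elim n)
    have "measure M {\<omega>\<in>space M. e < \<bar>A n \<omega> + B n \<omega>\<bar>}
        \<le> measure M ({\<omega>\<in>space M. e/2 < \<bar>A n \<omega>\<bar>} \<union> {\<omega>\<in>space M. e/2 < \<bar>B n \<omega>\<bar>})"
      by (rule finite_measure_mono) auto
    also have "\<dots> \<le> measure M {\<omega>\<in>space M. e/2 < \<bar>A n \<omega>\<bar>} + measure M {\<omega>\<in>space M. e/2 < \<bar>B n \<omega>\<bar>}"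
      by (rule measure_Un_le) auto
    finally show ?case using elim by simp
  qed
qed

lemma oP_sum:
  assumes "finite_measure M" "finite S" "\<And>s. s \<in> S \<Longrightarrow> oP M (F s)"
  shows "oP M (\<lambda>n \<omega>. \<Sum>s\<in>S. F s n \<omega>)"
  using assms(2,3)
proof (induction S rule: finite_induct)
  case empty then show ?case by (simp add: oP_zero)
next
  case (insert x S)
  then show ?case using oP_add[OF assms(1), of "F x" "\<lambda>n \<omega>. \<Sum>s\<in>S. F s n \<omega>"] by simp
qed

lemma oP_cmult:
  assumes "oP M A"
  shows "oP M (\<lambda>n \<omega>. c * A n \<omega>)"
proof (cases "c = 0")
  case True then show ?thesis using oP_zero by simp
next
  case False
  have [measurable]: "A n \<in> borel_measurable M" for n using assms oP_meas by auto
  show ?thesis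
  proof (rule oP_I)
    show "(\<lambda>\<omega>. c * A n \<omega>) \<in> borel_measurable M" for n by simp
    fix e \<eta> :: real assume e: "e > 0" and \<eta>: "\<eta> > 0"
    have "eventually (\<lambda>n. measure M {\<omega>\<in>space M. e/\<bar>c\<bar> < \<bar>A n \<omega>\<bar>} < \<eta>) sequentially"
      using oP_ev[OF assms] e \<eta> False by simp
    moreover have "{\<omega>\<in>space M. e/\<bar>c\<bar> < \<bar>A n \<omega>\<bar>} = {\<omega>\<in>space M. e < \<bar>c * A n \<omega>\<bar>}" for n
      using False by (auto simp: abs_mult field_simps)
    ultimately show "eventually (\<lambda>n. measure M {\<omega>\<in>space M. e < \<bar>c * A n \<omega>\<bar>} \<le> \<eta>) sequentially"
      by (auto elim: eventually_mono)
  qed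
qed

lemma (in prob_space) prob_gt_le_L2:
  assumes [measurable]: "f \<in> borel_measurable M" and int: "integrable M (\<lambda>x. (f x)\<^sup>2)" and e: "e > 0"
  shows "prob {x\<in>space M. e < \<bar>f x\<bar>} \<le> (\<integral>x. (f x)\<^sup>2 \<partial>M) / e\<^sup>2"
proof -
  have "prob {x\<in>space M. e < \<bar>f x\<bar>} \<le> prob {x\<in>space M. (f x)\<^sup>2 \<ge> e\<^sup>2}"
  proof (rule finite_measure_mono)
    show "{x\<in>space M. e < \<bar>f x\<bar>} \<subseteq> {x\<in>space M. (f x)\<^sup>2 \<ge> e\<^sup>2}"
      using e by (auto simp: abs_le_square_iff[symmetric] intro: less_imp_le)
  qed simp
  also have "\<dots> \<le> (\<integral>x. (f x)\<^sup>2 \<partial>M) / e\<^sup>2"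
    by (rule integral_Markov_inequality_measure) (use int e in auto)
  finally show ?thesis .
qed

lemma oP_L2:
  assumes "prob_space M" and [measurable]: "\<And>n. W n \<in> borel_measurable M"
    and int: "\<And>n. integrable M (\<lambda>x. (W n x)\<^sup>2)"
    and lim: "(\<lambda>n. \<integral>x. (W n x)\<^sup>2 \<partial>M) \<longlonglongrightarrow> 0"
  shows "oP M W"
proof (rule oP_I)
  interpret prob_space M by fact
  show "W n \<in> borel_measurable M" for n by simp
  fix e \<eta> :: real assume e: "e > 0" and \<eta>: "\<eta> > 0"
  have "eventually (\<lambda>n. (\<integral>x. (W n x)\<^sup>2 \<partial>M) < \<eta> * e\<^sup>2) sequentially"
    using order_tendstoD(2)[OF lim, of "\<eta> * e\<^sup>2"] e \<eta> by simp
  then show "eventually (\<lambda>n. measure M {\<omega>\<in>space M. e < \<bar>W n \<omega>\<bar>} \<le> \<eta>) sequentially"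
  proof eventually_elim
    case (elim n)
    have "measure M {\<omega>\<in>space M. e < \<bar>W n \<omega>\<bar>} \<le> (\<integral>x. (W n x)\<^sup>2 \<partial>M) / e\<^sup>2"
      by (rule prob_gt_le_L2) (use int e in auto)
    also have "\<dots> \<le> \<eta>" using elim e by (simp add: divide_le_eq)
    finally show ?case .
  qed
qed

lemma (in prob_space) cdf_distr_eq:
  assumes [measurable]: "f \<in> borel_measurable M"
  shows "cdf (distr M borel f) y = prob {\<omega>\<in>space M. f \<omega> \<le> y}"
  unfolding cdf_def by (subst measure_distr) (auto intro!: arg_cong[where f=prob])

lemma real_distribution_cont_point:
  assumes "real_distribution L" "a < b"
  shows "\<exists>y. a < y \<and> y < b \<and> isCont (cdf L) y"
proof -
  interpret real_distribution L by fact
  have "uncountable {a<..<b}" using assms(2) uncountable_open_interval by blast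
  then have "\<not> {a<..<b} \<subseteq> {x. measure L {x} > 0}"
    using countable_atoms countable_subset by blast
  then obtain y where "y \<in> {a<..<b}" "y \<notin> {x. measure L {x} > 0}" by blast
  moreover have "measure L {y} \<ge> 0" by simp
  ultimately show ?thesis using isCont_cdf[of y] by (intro exI[of _ y]) auto
qed

lemma (in prob_space) slutsky:
  assumes [measurable]: "\<And>n. A n \<in> borel_measurable M"
    and wc: "weak_conv_m (\<lambda>n. distr M borel (A n)) L"
    and L: "real_distribution L"
    and B: "oP M B"
  shows "weak_conv_m (\<lambda>n. distr M borel (\<lambda>\<omega>. A n \<omega> + B n \<omega>)) L"
  unfolding weak_conv_m_def weak_conv_def
proof (intro allI impI)
  have [measurable]: "B n \<in> borel_measurable M" for n using B oP_meas by auto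
  fix x assume cont: "isCont (cdf L) x"
  let ?F = "cdf L"
  let ?G = "\<lambda>n. prob {\<omega>\<in>space M. A n \<omega> + B n \<omega> \<le> x}"
  let ?FA = "\<lambda>n y. prob {\<omega>\<in>space M. A n \<omega> \<le> y}"
  have FA: "(\<lambda>n. ?FA n y) \<longlonglongrightarrow> ?F y" if "isCont ?F y" for y
    using wc that unfolding weak_conv_m_def weak_conv_def by (simp add: cdf_distr_eq)
  have "?G \<longlonglongrightarrow> ?F x"
  proof (rule tendstoI)
    fix \<eta> :: real assume \<eta>: "\<eta> > 0"
    from cont[unfolded isCont_def, THEN LIM_D, of "\<eta>/2"] \<eta>
    obtain e where e: "e > 0" and ee: "\<And>y. y \<noteq> x \<Longrightarrow> dist y x < e \<Longrightarrow> dist (?F y) (?F x) < \<eta>/2"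
      by (force simp: dist_real_def)
    obtain y1 where y1: "x < y1" "y1 < x + e" "isCont ?F y1"
      using real_distribution_cont_point[OF L, of x "x+e"] e by auto
    obtain y0 where y0: "x - e < y0" "y0 < x" "isCont ?F y0"
      using real_distribution_cont_point[OF L, of "x-e" x] e by auto
    have F1: "?F y1 < ?F x + \<eta>/2" using ee[of y1] y1 unfolding dist_real_def by (smt (verit))
    have F0: "?F y0 > ?F x - \<eta>/2" using ee[of y0] y0 unfolding dist_real_def by (smt (verit))
    have ev1: "eventually (\<lambda>n. ?FA n y1 < ?F y1 + \<eta>/4) sequentially"
      using order_tendstoD(2)[OF FA[OF y1(3)]] \<eta> by simp
    have ev0: "eventually (\<lambda>n. ?FA n y0 > ?F y0 - \<eta>/4) sequentially"
      using order_tendstoD(1)[OF FA[OF y0(3)]] \<eta> by simp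
    have evB1: "eventually (\<lambda>n. prob {\<omega>\<in>space M. y1 - x < \<bar>B n \<omega>\<bar>} < \<eta>/4) sequentially"
      by (rule oP_ev[OF B]) (use y1 \<eta> in auto)
    have evB0: "eventually (\<lambda>n. prob {\<omega>\<in>space M. x - y0 < \<bar>B n \<omega>\<bar>} < \<eta>/4) sequentially"
      by (rule oP_ev[OF B]) (use y0 \<eta> in auto)
    from ev1 ev0 evB1 evB0
    show "eventually (\<lambda>n. dist (?G n) (?F x) < \<eta>) sequentially"
    proof eventually_elim
      case (elim n)
      have "?G n \<le> prob ({\<omega>\<in>space M. A n \<omega> \<le> y1} \<union> {\<omega>\<in>space M. y1 - x < \<bar>B n \<omega>\<bar>})"
        by (rule finite_measure_mono) auto
      also have "\<dots> \<le> ?FA n y1 + prob {\<omega>\<in>space M. y1 - x < \<bar>B n \<omega>\<bar>}"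
        by (rule measure_Un_le) auto
      finally have up: "?G n < ?F x + \<eta>" using elim F1 by simp
      have "?FA n y0 \<le> prob ({\<omega>\<in>space M. A n \<omega> + B n \<omega> \<le> x} \<union> {\<omega>\<in>space M. x - y0 < \<bar>B n \<omega>\<bar>})"
        by (rule finite_measure_mono) auto
      also have "\<dots> \<le> ?G n + prob {\<omega>\<in>space M. x - y0 < \<bar>B n \<omega>\<bar>}"
        by (rule measure_Un_le) auto
      finally have lo: "?G n > ?F x - \<eta>" using elim F0 by simp
      show ?case using up lo by (simp add: dist_real_def abs_less_iff)
    qed
  qed
  then show "(\<lambda>n. cdf (distr M borel (\<lambda>\<omega>. A n \<omega> + B n \<omega>)) x) \<longlonglongrightarrow> cdf L x"
    by (simp add: cdf_distr_eq)
qed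

lemma (in prob_space) sq_sum_indep:
  fixes X :: "'i \<Rightarrow> 'a \<Rightarrow> real"
  assumes "finite J" "indep_vars (\<lambda>_. borel) X J"
    and sq: "\<And>i. i \<in> J \<Longrightarrow> integrable M (\<lambda>\<omega>. (X i \<omega>)\<^sup>2)"
    and mean: "\<And>i. i \<in> J \<Longrightarrow> expectation (X i) = 0"
  shows "integrable M (\<lambda>\<omega>. (\<Sum>i\<in>J. X i \<omega>)\<^sup>2) \<and>
         expectation (\<lambda>\<omega>. (\<Sum>i\<in>J. X i \<omega>)\<^sup>2) = (\<Sum>i\<in>J. expectation (\<lambda>\<omega>. (X i \<omega>)\<^sup>2))"
  using assms
proof (induction J rule: finite_induct)
  case empty then show ?case by simp
next
  case (insert x F)
  have indF: "indep_vars (\<lambda>_. borel) X F"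
    using insert(4) by (rule indep_vars_subset) auto
  have rv: "\<And>i. i \<in> insert x F \<Longrightarrow> random_variable borel (X i)"
    using insert(4) unfolding indep_vars_def by auto
  have intX: "integrable M (X i)" if "i \<in> insert x F" for i
    using square_integrable_imp_integrable[OF rv[OF that] insert(5)[OF that]] .
  from insert(3)[OF indF] insert(5,6)
  have IH: "integrable M (\<lambda>\<omega>. (\<Sum>i\<in>F. X i \<omega>)\<^sup>2)"
    "expectation (\<lambda>\<omega>. (\<Sum>i\<in>F. X i \<omega>)\<^sup>2) = (\<Sum>i\<in>F. expectation (\<lambda>\<omega>. (X i \<omega>)\<^sup>2))"
    by auto
  have ind: "indep_var borel (X x) borel (\<lambda>\<omega>. \<Sum>i\<in>F. X i \<omega>)"
    using insert(1,2,4) by (rule indep_vars_sum)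
  have intS: "integrable M (\<lambda>\<omega>. \<Sum>i\<in>F. X i \<omega>)"
    using intX by auto
  have prod_int: "integrable M (\<lambda>\<omega>. X x \<omega> * (\<Sum>i\<in>F. X i \<omega>))"
    by (rule indep_var_integrable[OF ind intX[of x] intS]) simp
  have prod_eq: "expectation (\<lambda>\<omega>. X x \<omega> * (\<Sum>i\<in>F. X i \<omega>)) = 0"
    using indep_var_lebesgue_integral[OF ind intX[of x] intS] insert(6)[of x] by simp
  have eq: "(\<lambda>\<omega>. (\<Sum>i\<in>insert x F. X i \<omega>)\<^sup>2) =
     (\<lambda>\<omega>. (X x \<omega>)\<^sup>2 + 2 * (X x \<omega> * (\<Sum>i\<in>F. X i \<omega>)) + (\<Sum>i\<in>F. X i \<omega>)\<^sup>2)"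
    using insert(1,2) by (simp add: power2_sum ac_simps)
  have i1: "integrable M (\<lambda>\<omega>. (X x \<omega>)\<^sup>2)" using insert(5) by simp
  show ?case
  proof
    have i2: "integrable M (\<lambda>\<omega>. 2 * (X x \<omega> * (\<Sum>i\<in>F. X i \<omega>)))"
      using prod_int by simp
    show "integrable M (\<lambda>\<omega>. (\<Sum>i\<in>insert x F. X i \<omega>)\<^sup>2)"
      unfolding eq by (intro Bochner_Integration.integrable_add i1 i2 IH(1))
    have "expectation (\<lambda>\<omega>. (\<Sum>i\<in>insert x F. X i \<omega>)\<^sup>2) =
      expectation (\<lambda>\<omega>. (X x \<omega>)\<^sup>2 + 2 * (X x \<omega> * (\<Sum>i\<in>F. X i \<omega>)))
       + expectation (\<lambda>\<omega>. (\<Sum>i\<in>F. X i \<omega>)\<^sup>2)"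
      unfolding eq by (rule Bochner_Integration.integral_add) (intro Bochner_Integration.integrable_add i1 i2, rule IH(1))
    also have "expectation (\<lambda>\<omega>. (X x \<omega>)\<^sup>2 + 2 * (X x \<omega> * (\<Sum>i\<in>F. X i \<omega>))) =
      expectation (\<lambda>\<omega>. (X x \<omega>)\<^sup>2) + expectation (\<lambda>\<omega>. 2 * (X x \<omega> * (\<Sum>i\<in>F. X i \<omega>)))"
      by (rule Bochner_Integration.integral_add[OF i1 i2])
    also have "expectation (\<lambda>\<omega>. 2 * (X x \<omega> * (\<Sum>i\<in>F. X i \<omega>))) = 0"
      using prod_eq by simp
    finally show "expectation (\<lambda>\<omega>. (\<Sum>i\<in>insert x F. X i \<omega>)\<^sup>2) = (\<Sum>i\<in>insert x F. expectation (\<lambda>\<omega>. (X i \<omega>)\<^sup>2))"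
      using insert(1,2) IH(2) by simp
  qed
qed

locale iidz = prob_space +
  fixes \<zeta> :: "nat \<Rightarrow> 'a \<Rightarrow> real" and s2 :: real and \<mu>z :: "real measure"
  assumes z_indep: "indep_vars (\<lambda>_. borel) \<zeta> UNIV"
    and z_sq: "\<And>i. integrable M (\<lambda>\<omega>. (\<zeta> i \<omega>)\<^sup>2)"
    and z_mean: "\<And>i. expectation (\<zeta> i) = 0"
    and z_var: "\<And>i. expectation (\<lambda>\<omega>. (\<zeta> i \<omega>)\<^sup>2) = s2"
    and z_distr: "\<And>i. distr M borel (\<zeta> i) = \<mu>z"
begin

lemma z_rv[measurable]: "\<zeta> i \<in> borel_measurable M"
  using z_indep unfolding indep_vars_def by auto

lemma z_int: "integrable M (\<zeta> i)"
  by (rule square_integrable_imp_integrable[OF z_rv z_sq])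

lemma s2_nonneg: "s2 \<ge> 0"
  using z_var[of 0] by (metis integral_nonneg_AE AE_I2 zero_le_power2)

lemma sq_lin:
  assumes "finite J"
  shows "integrable M (\<lambda>\<omega>. (\<Sum>i\<in>J. c i * \<zeta> i \<omega>)\<^sup>2)"
    and "expectation (\<lambda>\<omega>. (\<Sum>i\<in>J. c i * \<zeta> i \<omega>)\<^sup>2) = (\<Sum>i\<in>J. (c i)\<^sup>2) * s2"
proof -
  have ind: "indep_vars (\<lambda>_. borel) (\<lambda>i \<omega>. c i * \<zeta> i \<omega>) J"
    by (rule indep_vars_compose2[where X=\<zeta>, OF indep_vars_subset[OF z_indep]]) auto
  have "integrable M (\<lambda>\<omega>. (c i * \<zeta> i \<omega>)\<^sup>2)" for i
    using z_sq[of i] by (simp add: power_mult_distrib)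
  moreover have "expectation (\<lambda>\<omega>. c i * \<zeta> i \<omega>) = 0" for i
    using z_mean[of i] by simp
  moreover have "expectation (\<lambda>\<omega>. (c i * \<zeta> i \<omega>)\<^sup>2) = (c i)\<^sup>2 * s2" for i
    using z_var[of i] by (simp add: power_mult_distrib)
  ultimately have "integrable M (\<lambda>\<omega>. (\<Sum>i\<in>J. c i * \<zeta> i \<omega>)\<^sup>2) \<and>
         expectation (\<lambda>\<omega>. (\<Sum>i\<in>J. c i * \<zeta> i \<omega>)\<^sup>2) = (\<Sum>i\<in>J. (c i)\<^sup>2 * s2)"
    using sq_sum_indep[OF assms ind] by simp
  then show "integrable M (\<lambda>\<omega>. (\<Sum>i\<in>J. c i * \<zeta> i \<omega>)\<^sup>2)"
    and "expectation (\<lambda>\<omega>. (\<Sum>i\<in>J. c i * \<zeta> i \<omega>)\<^sup>2) = (\<Sum>i\<in>J. (c i)\<^sup>2) * s2"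
    by (auto simp: sum_distrib_right)
qed

lemma char_lin:
  assumes "finite J"
  shows "char (distr M borel (\<lambda>\<omega>. \<Sum>i\<in>J. c i * \<zeta> i \<omega>)) t = (\<Prod>i\<in>J. char \<mu>z (c i * t))"
proof -
  have ind: "indep_vars (\<lambda>_. borel) (\<lambda>i \<omega>. c i * \<zeta> i \<omega>) J"
    by (rule indep_vars_compose2[where X=\<zeta>, OF indep_vars_subset[OF z_indep]]) auto
  have "char (distr M borel (\<lambda>\<omega>. \<Sum>i\<in>J. c i * \<zeta> i \<omega>)) t =
     (\<Prod>i\<in>J. char (distr M borel (\<lambda>\<omega>. c i * \<zeta> i \<omega>)) t)"
    by (rule char_distr_sum[OF ind])
  also have "\<dots> = (\<Prod>i\<in>J. char \<mu>z (c i * t))"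
  proof (rule prod.cong)
    fix i
    have "char (distr M borel (\<lambda>\<omega>. c i * \<zeta> i \<omega>)) t = (CLINT \<omega>|M. iexp (t * (c i * \<zeta> i \<omega>)))"
      by (simp add: char_def integral_distr)
    also have "\<dots> = (CLINT \<omega>|M. iexp ((c i * t) * \<zeta> i \<omega>))"
      by (simp add: ac_simps)
    also have "\<dots> = char (distr M borel (\<zeta> i)) (c i * t)"
      by (simp add: char_def integral_distr)
    finally show "char (distr M borel (\<lambda>\<omega>. c i * \<zeta> i \<omega>)) t = char \<mu>z (c i * t)"
      by (simp add: z_distr)
  qed simp
  finally show ?thesis .
qed

definition sgn_set :: "nat set \<Rightarrow> nat \<Rightarrow> real" where
  "sgn_set A i = (if i \<in> A then 1 else -1)"

lemma pm_sum:
  assumes "finite A" "finite B" "A \<inter> B = {}"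
  shows "(\<Sum>i\<in>A. f i) - (\<Sum>i\<in>B. f i) = (\<Sum>i\<in>A \<union> B. sgn_set A i * f i)"
proof -
  have "(\<Sum>i\<in>A \<union> B. sgn_set A i * f i) = (\<Sum>i\<in>A. sgn_set A i * f i) + (\<Sum>i\<in>B. sgn_set A i * f i)"
    using assms by (rule sum.union_disjoint)
  also have "(\<Sum>i\<in>A. sgn_set A i * f i) = (\<Sum>i\<in>A. f i)"
    by (rule sum.cong) (auto simp: sgn_set_def)
  also have "(\<Sum>i\<in>B. sgn_set A i * f i) = - (\<Sum>i\<in>B. f i)"
    using assms(3) by (auto simp: sgn_set_def sum_negf[symmetric] intro!: sum.cong)
  finally show ?thesis by simp
qed

lemma char_pm:
  assumes "finite A" "finite B" "A \<inter> B = {}"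
  shows "char (distr M borel (\<lambda>\<omega>. ((\<Sum>i\<in>A. \<zeta> i \<omega>) - (\<Sum>i\<in>B. \<zeta> i \<omega>)) * r)) t
       = char \<mu>z (r * t) ^ card A * char \<mu>z (- r * t) ^ card B"
proof -
  have "(\<lambda>\<omega>. ((\<Sum>i\<in>A. \<zeta> i \<omega>) - (\<Sum>i\<in>B. \<zeta> i \<omega>)) * r) = (\<lambda>\<omega>. \<Sum>i\<in>A \<union> B. (sgn_set A i * r) * \<zeta> i \<omega>)"
    using pm_sum[OF assms, of "\<lambda>i. \<zeta> i _"] by (auto simp: sum_distrib_left sum_distrib_right ac_simps)
  then have "char (distr M borel (\<lambda>\<omega>. ((\<Sum>i\<in>A. \<zeta> i \<omega>) - (\<Sum>i\<in>B. \<zeta> i \<omega>)) * r)) t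
     = (\<Prod>i\<in>A \<union> B. char \<mu>z (sgn_set A i * r * t))"
    using char_lin[of "A \<union> B" "\<lambda>i. sgn_set A i * r" t] assms by simp
  also have "\<dots> = (\<Prod>i\<in>A. char \<mu>z (sgn_set A i * r * t)) * (\<Prod>i\<in>B. char \<mu>z (sgn_set A i * r * t))"
    using assms by (rule prod.union_disjoint)
  also have "(\<Prod>i\<in>A. char \<mu>z (sgn_set A i * r * t)) = char \<mu>z (r * t) ^ card A"
    by (simp add: sgn_set_def)
  also have "(\<Prod>i\<in>B. char \<mu>z (sgn_set A i * r * t)) = char \<mu>z (- r * t) ^ card B"
    using assms(3) by (subst prod.cong[OF refl, of _ _ "\<lambda>_. char \<mu>z (- r * t)"]) (auto simp: sgn_set_def)
  finally show ?thesis .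
qed

end

lemma real_distribution_gauss0: "real_distribution (gauss0 v)"
proof (cases "v > 0")
  case True
  have "gauss0 v = density lborel (normal_density 0 (sqrt v))" using True by (simp add: gauss0_def)
  then show ?thesis using True by (simp add: real_distribution_def real_distribution_axioms_def prob_space_normal_density)
next
  case False
  then show ?thesis unfolding gauss0_def
    by (simp add: real_distribution_def real_distribution_axioms_def prob_space_return)
qed

lemma char_gauss0:
  assumes "v > 0"
  shows "char (gauss0 v) t = char std_normal_distribution (sqrt v * t)"
proof -
  interpret S: prob_space std_normal_distribution
    using real_dist_normal_dist real_distribution_def by blast
  have d0: "distributed std_normal_distribution lborel (\<lambda>x. x) (normal_density 0 1)"
    unfolding distributed_def by (simp add: distr_id2)
  have "distributed std_normal_distribution lborel (\<lambda>x. 0 + sqrt v * x) (normal_density (0 + sqrt v * 0) (\<bar>sqrt v\<bar> * 1))"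
    by (rule S.normal_density_affine[OF d0]) (use assms in auto)
  then have eq: "distr std_normal_distribution lborel (\<lambda>x. sqrt v * x) = gauss0 v"
    using assms by (simp add: distributed_def gauss0_def)
  have [measurable]: "(\<lambda>x::real. sqrt v * x) \<in> measurable std_normal_distribution lborel"
    by simp
  have "char (gauss0 v) t = (CLINT x|distr std_normal_distribution lborel (\<lambda>x. sqrt v * x). iexp (t * x))"
    by (simp add: char_def eq)
  also have "\<dots> = (CLINT x|std_normal_distribution. iexp (t * (sqrt v * x)))"
    by (rule integral_distr) auto
  also have "\<dots> = char std_normal_distribution (sqrt v * t)"
    by (simp add: char_def ac_simps)
  finally show ?thesis .
qed

context iidz begin

definition eta :: "nat \<Rightarrow> 'a \<Rightarrow> real" where
  "eta j \<omega> = \<zeta> (2*j) \<omega> - \<zeta> (2*j+1) \<omega>"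

lemma eta_rv[measurable]: "eta j \<in> borel_measurable M"
  unfolding eta_def by measurable

lemma eta_lin: "eta j \<omega> = (\<Sum>i\<in>{2*j, 2*j+1}. sgn_set {2*j} i * \<zeta> i \<omega>)"
  by (simp add: eta_def sgn_set_def)

lemma eta_indep: "indep_vars (\<lambda>_. borel) eta UNIV"
proof -
  let ?K = "\<lambda>j::nat. {2*j, 2*j+1}"
  have dj: "disjoint_family_on ?K UNIV"
    unfolding disjoint_family_on_def by auto
  have "indep_vars (\<lambda>j. PiM (?K j) (\<lambda>_. borel)) (\<lambda>j \<omega>. restrict (\<lambda>i. \<zeta> i \<omega>) (?K j)) UNIV"
    by (rule indep_vars_restrict[OF z_indep _ dj]) auto
  then have "indep_vars (\<lambda>_. borel) (\<lambda>j \<omega>. (\<lambda>f. f (2*j) - f (2*j+1)) (restrict (\<lambda>i. \<zeta> i \<omega>) (?K j))) UNIV"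
    by (rule indep_vars_compose2) auto
  then show ?thesis by (simp add: eta_def[abs_def])
qed

lemma eta_char: "char (distr M borel (eta j)) t = char \<mu>z t * char \<mu>z (- t)"
proof -
  have "eta j = (\<lambda>\<omega>. ((\<Sum>i\<in>{2*j}. \<zeta> i \<omega>) - (\<Sum>i\<in>{2*j+1}. \<zeta> i \<omega>)) * 1)"
    by (auto simp: eta_def)
  then show ?thesis using char_pm[of "{2*j}" "{2*j+1}" 1 t] by simp
qed

lemma eta_distr: "distr M borel (eta j) = distr M borel (eta 0)"
proof (rule Levy_uniqueness)
  show "real_distribution (distr M borel (eta j))" "real_distribution (distr M borel (eta 0))"
    by (auto intro!: real_distribution_distr)
  show "char (distr M borel (eta j)) = char (distr M borel (eta 0))"
    by (rule ext) (simp add: eta_char)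
qed

lemma eta_sq: "integrable M (\<lambda>\<omega>. (eta j \<omega>)\<^sup>2)" "expectation (\<lambda>\<omega>. (eta j \<omega>)\<^sup>2) = 2 * s2"
  using sq_lin[of "{2*j, 2*j+1}" "sgn_set {2*j}"] by (auto simp: eta_lin sgn_set_def)

lemma eta_mean: "expectation (eta j) = 0"
proof -
  have "expectation (eta j) = expectation (\<lambda>\<omega>. \<zeta> (2*j) \<omega> - \<zeta> (2*j+1) \<omega>)"
    by (simp add: eta_def[abs_def])
  also have "\<dots> = 0"
    by (subst Bochner_Integration.integral_diff) (auto simp: z_int z_mean)
  finally show ?thesis .
qed

lemma clt_pm:
  assumes s2: "s2 > 0" and v: "v > 0"
    and AB: "\<And>n. finite (A n)" "\<And>n. finite (B n)" "\<And>n. A n \<inter> B n = {}"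
    and cA: "\<And>n. card (A n) = N n" and cB: "\<And>n. card (B n) = N n"
    and N: "filterlim N at_top sequentially"
  shows "weak_conv_m (\<lambda>n. distr M borel (\<lambda>\<omega>. ((\<Sum>i\<in>A n. \<zeta> i \<omega>) - (\<Sum>i\<in>B n. \<zeta> i \<omega>)) * (sqrt v / sqrt (2 * s2 * N n))))
     (gauss0 v)"
proof (rule levy_continuity)
  show "real_distribution (distr M borel (\<lambda>\<omega>. ((\<Sum>i\<in>A n. \<zeta> i \<omega>) - (\<Sum>i\<in>B n. \<zeta> i \<omega>)) * (sqrt v / sqrt (2 * s2 * N n))))" for n
    by simp
  show "real_distribution (gauss0 v)" by (rule real_distribution_gauss0)
  fix t :: real
  define \<sigma> where "\<sigma> = sqrt (2 * s2)"
  have \<sigma>: "\<sigma> > 0" "\<sigma>\<^sup>2 = 2 * s2" using s2 by (auto simp: \<sigma>_def)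
  have var: "variance (eta n) = \<sigma>\<^sup>2" for n
    using eta_sq eta_mean \<sigma> by simp
  have clt: "weak_conv_m (\<lambda>m. distr M borel (\<lambda>x. (\<Sum>i<m. eta i x - 0) / sqrt (m * \<sigma>\<^sup>2))) std_normal_distribution"
    by (rule central_limit_theorem[OF eta_indep eta_mean \<sigma>(1) eta_sq(1) var eta_distr])
  have lim: "(\<lambda>m. char (distr M borel (\<lambda>x. (\<Sum>i<m. eta i x - 0) / sqrt (m * \<sigma>\<^sup>2))) t') \<longlonglongrightarrow> char std_normal_distribution t'" for t'
    by (rule levy_continuity1[OF _ real_dist_normal_dist clt]) (intro real_distribution_distr, measurable)
  have chm: "char (distr M borel (\<lambda>x. (\<Sum>i<m. eta i x - 0) / sqrt (m * \<sigma>\<^sup>2))) t'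
     = char \<mu>z (1 / sqrt (m * \<sigma>\<^sup>2) * t') ^ m * char \<mu>z (- (1 / sqrt (m * \<sigma>\<^sup>2)) * t') ^ m" for m t'
  proof -
    let ?A = "(\<lambda>j. 2*j) ` {..<m}" and ?B = "(\<lambda>j. 2*j+1) ` {..<m}"
    have injA: "inj_on (\<lambda>j::nat. 2*j) {..<m}" and injB: "inj_on (\<lambda>j::nat. 2*j+1) {..<m}"
      by (auto simp: inj_on_def)
    have dj: "?A \<inter> ?B = {}" by auto presburger
    have sA: "(\<Sum>i\<in>?A. \<zeta> i x) = (\<Sum>j<m. \<zeta> (2*j) x)" for x
      by (rule sum.reindex_cong[OF injA]) auto
    have sB: "(\<Sum>i\<in>?B. \<zeta> i x) = (\<Sum>j<m. \<zeta> (2*j+1) x)" for x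
      by (rule sum.reindex_cong[OF injB]) auto
    have "(\<lambda>x. (\<Sum>i<m. eta i x - 0) / sqrt (m * \<sigma>\<^sup>2)) =
      (\<lambda>x. ((\<Sum>i\<in>?A. \<zeta> i x) - (\<Sum>i\<in>?B. \<zeta> i x)) * (1 / sqrt (m * \<sigma>\<^sup>2)))"
      unfolding sA sB by (simp add: eta_def sum_subtractf)
    then show ?thesis
      using char_pm[of ?A ?B "1 / sqrt (m * \<sigma>\<^sup>2)" t'] dj card_image[OF injA] card_image[OF injB]
      by simp
  qed
  have "(\<lambda>n. char (distr M borel (\<lambda>x. (\<Sum>i<N n. eta i x - 0) / sqrt (N n * \<sigma>\<^sup>2))) (sqrt v * t))
      \<longlonglongrightarrow> char std_normal_distribution (sqrt v * t)"
    by (rule filterlim_compose[OF lim N])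
  moreover have "char (distr M borel (\<lambda>x. (\<Sum>i<N n. eta i x - 0) / sqrt (N n * \<sigma>\<^sup>2))) (sqrt v * t) =
      char (distr M borel (\<lambda>\<omega>. ((\<Sum>i\<in>A n. \<zeta> i \<omega>) - (\<Sum>i\<in>B n. \<zeta> i \<omega>)) * (sqrt v / sqrt (2 * s2 * N n)))) t" for n
  proof -
    have e1: "1 / sqrt (N n * \<sigma>\<^sup>2) * (sqrt v * t) = sqrt v / sqrt (2 * s2 * N n) * t"
      using \<sigma> by (simp add: ac_simps)
    show ?thesis
      unfolding chm char_pm[OF AB] cA cB by (simp add: \<sigma>(2) ac_simps)
  qed
  ultimately show "(\<lambda>n. char (distr M borel (\<lambda>\<omega>. ((\<Sum>i\<in>A n. \<zeta> i \<omega>) - (\<Sum>i\<in>B n. \<zeta> i \<omega>)) * (sqrt v / sqrt (2 * s2 * N n)))) t)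
      \<longlonglongrightarrow> char (gauss0 v) t"
    using char_gauss0[OF v] by simp
qed

end

lemma PiM_coord_indep:
  assumes P: "prob_space P"
  shows "prob_space.indep_vars (PiM J (\<lambda>_. P)) (\<lambda>_. P) (\<lambda>i w. w i) J"
proof -
  interpret PJ: prob_space "PiM J (\<lambda>_. P)" by (rule prob_space_PiM) (use P in auto)
  show ?thesis
  proof (cases "J = {}")
    case True then show ?thesis
      unfolding PJ.indep_vars_def PJ.indep_sets_def by auto
  next
    case False
    have rv: "PJ.random_variable P (\<lambda>w. w i)" if "i \<in> J" for i
      using that by measurable
    have "distr (PiM J (\<lambda>_. P)) (PiM J (\<lambda>_. P)) (\<lambda>x. \<lambda>i\<in>J. x i) = distr (PiM J (\<lambda>_. P)) (PiM J (\<lambda>_. P)) (\<lambda>x. x)"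
      by (rule distr_cong) (auto simp: space_PiM)
    also have "\<dots> = PiM J (\<lambda>_. P)" by simp
    also have "\<dots> = PiM J (\<lambda>i. distr (PiM J (\<lambda>_. P)) P (\<lambda>w. w i))"
    proof (rule PiM_cong)
      fix i assume "i \<in> J"
      then show "P = distr (PiM J (\<lambda>_. P)) P (\<lambda>w. w i)"
        using distr_PiM_component[of J "\<lambda>_. P" i] P by simp
    qed simp
    finally show ?thesis
      using PJ.indep_vars_iff_distr_eq_PiM'[OF False rv] by simp
  qed
qed

lemma PiM_coord_integral:
  fixes g :: "'z \<Rightarrow> real"
  assumes P: "prob_space P" and i: "i \<in> J" and g[measurable]: "g \<in> borel_measurable P"
  shows "(\<integral>w. g (w i) \<partial>PiM J (\<lambda>_. P)) = (\<integral>z. g z \<partial>P)"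
    and "integrable (PiM J (\<lambda>_. P)) (\<lambda>w. g (w i)) \<longleftrightarrow> integrable P g"
proof -
  have d: "distr (PiM J (\<lambda>_. P)) P (\<lambda>w. w i) = P"
    by (rule distr_PiM_component) (use P i in auto)
  have m: "(\<lambda>w. w i) \<in> measurable (PiM J (\<lambda>_. P)) P" using i by measurable
  show "(\<integral>w. g (w i) \<partial>PiM J (\<lambda>_. P)) = (\<integral>z. g z \<partial>P)"
    using integral_distr[OF m, of g] d by simp
  show "integrable (PiM J (\<lambda>_. P)) (\<lambda>w. g (w i)) \<longleftrightarrow> integrable P g"
    using integrable_distr_eq[OF m, of g] d by simp
qed

lemma (in prob_space) fluct_bound:
  fixes V :: "'a \<Rightarrow> 'i \<Rightarrow> 'z" and W :: "'a \<Rightarrow> 'i \<Rightarrow> 'z" and F :: "('i \<Rightarrow> 'z) \<Rightarrow> 'z \<Rightarrow> real"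
  assumes P: "prob_space P"
    and ind: "indep_var MV V (PiM J (\<lambda>_. P)) W"
    and WD: "distr M (PiM J (\<lambda>_. P)) W = PiM J (\<lambda>_. P)"
    and Fm: "(\<lambda>(v,z). F v z) \<in> borel_measurable (MV \<Otimes>\<^sub>M P)"
    and J: "finite J" and e: "e > 0" and \<delta>: "\<delta> \<ge> 0"
  shows "prob {\<omega>\<in>space M. e < \<bar>\<Sum>i\<in>J. F (V \<omega>) (W \<omega> i) - (\<integral>z. F (V \<omega>) z \<partial>P)\<bar> \<and>
                 (\<integral>\<^sup>+z. ennreal ((F (V \<omega>) z)\<^sup>2) \<partial>P) \<le> ennreal \<delta>} \<le> real (card J) * \<delta> / e\<^sup>2"
proof -
  interpret P: prob_space P by fact
  let ?PJ = "PiM J (\<lambda>_. P)"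
  interpret PJ: prob_space ?PJ by (rule prob_space_PiM) (use P in auto)
  have [measurable]: "V \<in> measurable M MV" using ind by (rule indep_var_rv1)
  have [measurable]: "W \<in> measurable M ?PJ" using ind by (rule indep_var_rv2)
  define b where "b v = (\<integral>z. F v z \<partial>P)" for v
  define q where "q v = (\<integral>\<^sup>+z. ennreal ((F v z)\<^sup>2) \<partial>P)" for v
  have Fm'[measurable]: "(\<lambda>x. F (f x) (g x)) \<in> borel_measurable N" if "f \<in> measurable N MV" "g \<in> measurable N P" for f g N
    using measurable_compose[OF measurable_Pair[OF that] Fm] by simp
  have bm[measurable]: "b \<in> borel_measurable MV"
    unfolding b_def by (rule P.borel_measurable_lebesgue_integral) (use Fm in simp)
  have qm[measurable]: "q \<in> borel_measurable MV"
    unfolding q_def by (rule P.borel_measurable_nn_integral) (use Fm in measurable)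
  define f where "f v w = (\<Sum>i\<in>J. F v (w i) - b v)" for v w
  have fm[measurable]: "(\<lambda>x. f (fst x) (snd x)) \<in> borel_measurable (MV \<Otimes>\<^sub>M ?PJ)"
    unfolding f_def by measurable
  define G where "G = {x \<in> space (MV \<Otimes>\<^sub>M ?PJ). e < \<bar>f (fst x) (snd x)\<bar> \<and> q (fst x) \<le> ennreal \<delta>}"
  have G[measurable]: "G \<in> sets (MV \<Otimes>\<^sub>M ?PJ)"
    unfolding G_def by measurable
  have VW[measurable]: "(\<lambda>\<omega>. (V \<omega>, W \<omega>)) \<in> measurable M (MV \<Otimes>\<^sub>M ?PJ)" by measurable
  have "{\<omega>\<in>space M. e < \<bar>\<Sum>i\<in>J. F (V \<omega>) (W \<omega> i) - (\<integral>z. F (V \<omega>) z \<partial>P)\<bar> \<and>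
                 (\<integral>\<^sup>+z. ennreal ((F (V \<omega>) z)\<^sup>2) \<partial>P) \<le> ennreal \<delta>} = (\<lambda>\<omega>. (V \<omega>, W \<omega>)) -` G \<inter> space M"
    unfolding G_def f_def b_def q_def using measurable_space[OF VW] by auto
  then have "prob {\<omega>\<in>space M. e < \<bar>\<Sum>i\<in>J. F (V \<omega>) (W \<omega> i) - (\<integral>z. F (V \<omega>) z \<partial>P)\<bar> \<and>
                 (\<integral>\<^sup>+z. ennreal ((F (V \<omega>) z)\<^sup>2) \<partial>P) \<le> ennreal \<delta>} = measure (distr M (MV \<Otimes>\<^sub>M ?PJ) (\<lambda>\<omega>. (V \<omega>, W \<omega>))) G"
    by (simp add: measure_distr)
  also have "distr M (MV \<Otimes>\<^sub>M ?PJ) (\<lambda>\<omega>. (V \<omega>, W \<omega>)) = distr M MV V \<Otimes>\<^sub>M ?PJ"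
    using indep_var_distribution_eq[of MV V ?PJ W] ind WD by simp
  finally have eq1: "prob {\<omega>\<in>space M. e < \<bar>\<Sum>i\<in>J. F (V \<omega>) (W \<omega> i) - (\<integral>z. F (V \<omega>) z \<partial>P)\<bar> \<and>
                 (\<integral>\<^sup>+z. ennreal ((F (V \<omega>) z)\<^sup>2) \<partial>P) \<le> ennreal \<delta>} = measure (distr M MV V \<Otimes>\<^sub>M ?PJ) G" .
  interpret DV: prob_space "distr M MV V" by (rule prob_space_distr) simp
  have G': "G \<in> sets (distr M MV V \<Otimes>\<^sub>M ?PJ)" using G by simp
  have pt: "emeasure ?PJ (Pair v -` G) \<le> ennreal (real (card J) * \<delta> / e\<^sup>2)" if v: "v \<in> space MV" for v
  proof (cases "q v \<le> ennreal \<delta>")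
    case False
    then have "Pair v -` G = {}" unfolding G_def by auto
    then show ?thesis by simp
  next
    case True
    have sub: "Pair v -` G \<subseteq> {w\<in>space ?PJ. e < \<bar>f v w\<bar>}"
      unfolding G_def using v by (auto simp: space_pair_measure)
    have Fv[measurable]: "F v \<in> borel_measurable P" using Fm'[of "\<lambda>_. v" P "\<lambda>z. z"] v by simp
    have qfin: "q v < \<infinity>" using True by (simp add: top_unique) (metis ennreal_less_top le_less_trans)
    have int2: "integrable P (\<lambda>z. (F v z)\<^sup>2)"
      by (rule integrableI_nonneg) (use qfin in \<open>auto simp: q_def\<close>)
    have int1: "integrable P (F v)" by (rule P.square_integrable_imp_integrable[OF Fv int2])
    have Eq: "(\<integral>z. (F v z)\<^sup>2 \<partial>P) \<le> \<delta>"
    proof -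
      have "ennreal (\<integral>z. (F v z)\<^sup>2 \<partial>P) = q v"
        unfolding q_def by (rule nn_integral_eq_integral[symmetric]) (use int2 in auto)
      then have "ennreal (\<integral>z. (F v z)\<^sup>2 \<partial>P) \<le> ennreal \<delta>" using True by simp
      then show ?thesis using ennreal_le_iff[OF \<delta>] by simp
    qed
    have var: "(\<integral>z. (F v z - b v)\<^sup>2 \<partial>P) \<le> \<delta>"
    proof -
      have "(\<integral>z. (F v z - b v)\<^sup>2 \<partial>P) = P.variance (F v)" by (simp add: b_def)
      also have "\<dots> = (\<integral>z. (F v z)\<^sup>2 \<partial>P) - (\<integral>z. F v z \<partial>P)\<^sup>2"
        by (rule P.variance_eq[OF int1 int2])
      also have "\<dots> \<le> \<delta>" using Eq by (smt (verit) zero_le_power2)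
      finally show ?thesis .
    qed
    define X where "X i w = F v (w i) - b v" for i :: 'i and w :: "'i \<Rightarrow> 'z"
    have indX: "PJ.indep_vars (\<lambda>_. borel) X J"
      unfolding X_def
      by (rule PJ.indep_vars_compose2[OF PiM_coord_indep[OF P]]) simp
    have intd: "integrable P (\<lambda>z. (F v z - b v)\<^sup>2)"
      using int1 int2 by (simp add: power2_diff)
    have sqX: "integrable ?PJ (\<lambda>w. (X i w)\<^sup>2)" if "i \<in> J" for i
      unfolding X_def using PiM_coord_integral(2)[OF P that, of "\<lambda>z. (F v z - b v)\<^sup>2"] intd by simp
    have mX: "PJ.expectation (X i) = 0" if "i \<in> J" for i
    proof -
      have "PJ.expectation (X i) = PJ.expectation (\<lambda>w. F v (w i) - b v)" by (simp add: X_def[abs_def])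
      also have "\<dots> = (\<integral>z. F v z - b v \<partial>P)"
        by (rule PiM_coord_integral(1)[OF P that]) simp
      also have "\<dots> = 0" using int1 by (simp add: b_def P.prob_space)
      finally show ?thesis .
    qed
    have vX: "PJ.expectation (\<lambda>w. (X i w)\<^sup>2) = (\<integral>z. (F v z - b v)\<^sup>2 \<partial>P)" if "i \<in> J" for i
      unfolding X_def by (rule PiM_coord_integral(1)[OF P that]) simp
    from PJ.sq_sum_indep[OF J indX sqX mX]
    have S: "integrable ?PJ (\<lambda>w. (f v w)\<^sup>2)" "PJ.expectation (\<lambda>w. (f v w)\<^sup>2) = real (card J) * (\<integral>z. (F v z - b v)\<^sup>2 \<partial>P)"
      using vX by (simp_all add: f_def X_def)
    have fvm[measurable]: "f v \<in> borel_measurable ?PJ" unfolding f_def by measurable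
    have "emeasure ?PJ (Pair v -` G) \<le> emeasure ?PJ {w\<in>space ?PJ. e < \<bar>f v w\<bar>}"
      by (rule emeasure_mono[OF sub]) measurable
    also have "\<dots> = ennreal (PJ.prob {w\<in>space ?PJ. e < \<bar>f v w\<bar>})"
      by (simp add: PJ.emeasure_eq_measure)
    also have "PJ.prob {w\<in>space ?PJ. e < \<bar>f v w\<bar>} \<le> real (card J) * \<delta> / e\<^sup>2"
    proof -
      have "PJ.prob {w\<in>space ?PJ. e < \<bar>f v w\<bar>} \<le> PJ.expectation (\<lambda>w. (f v w)\<^sup>2) / e\<^sup>2"
        by (rule PJ.prob_gt_le_L2[OF fvm S(1) e])
      also have "\<dots> \<le> real (card J) * \<delta> / e\<^sup>2"
        unfolding S(2) using var e by (intro divide_right_mono mult_left_mono) auto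
      finally show ?thesis .
    qed
    then have "ennreal (PJ.prob {w\<in>space ?PJ. e < \<bar>f v w\<bar>}) \<le> ennreal (real (card J) * \<delta> / e\<^sup>2)"
      by (rule ennreal_leI)
    finally show ?thesis by simp
  qed
  have "emeasure (distr M MV V \<Otimes>\<^sub>M ?PJ) G = (\<integral>\<^sup>+v. emeasure ?PJ (Pair v -` G) \<partial>distr M MV V)"
    by (rule PJ.emeasure_pair_measure_alt[OF G'])
  also have "\<dots> \<le> (\<integral>\<^sup>+v. ennreal (real (card J) * \<delta> / e\<^sup>2) \<partial>distr M MV V)"
    by (rule nn_integral_mono) (use pt in simp)
  also have "\<dots> = ennreal (real (card J) * \<delta> / e\<^sup>2)"
    using DV.emeasure_space_1 by simp
  finally have "measure (distr M MV V \<Otimes>\<^sub>M ?PJ) G \<le> real (card J) * \<delta> / e\<^sup>2"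
    using \<delta> e unfolding measure_def by (intro enn2real_leI) auto
  then show ?thesis using eq1 by simp
qed

lemma (in prob_space) oP_dom:
  assumes A: "oP M A" and [measurable]: "\<And>n. B n \<in> borel_measurable M"
    and le: "\<And>n \<omega>. \<omega> \<in> space M \<Longrightarrow> \<bar>B n \<omega>\<bar> \<le> \<bar>A n \<omega>\<bar>"
  shows "oP M B"
proof (rule oP_I)
  show "B n \<in> borel_measurable M" for n by simp
  fix e \<eta> :: real assume "e > 0" "\<eta> > 0"
  have [measurable]: "A n \<in> borel_measurable M" for n using oP_meas[OF A] .
  have "eventually (\<lambda>n. measure M {\<omega>\<in>space M. e < \<bar>A n \<omega>\<bar>} < \<eta>) sequentially"
    using oP_ev[OF A] \<open>e>0\<close> \<open>\<eta>>0\<close> by auto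
  then show "eventually (\<lambda>n. measure M {\<omega>\<in>space M. e < \<bar>B n \<omega>\<bar>} \<le> \<eta>) sequentially"
  proof eventually_elim
    case (elim n)
    have "measure M {\<omega>\<in>space M. e < \<bar>B n \<omega>\<bar>} \<le> measure M {\<omega>\<in>space M. e < \<bar>A n \<omega>\<bar>}"
      by (rule finite_measure_mono) (use le in \<open>auto intro: less_le_trans\<close>)
    then show ?case using elim by simp
  qed
qed

lemma unif_from_seq:
  fixes Q :: "'p \<Rightarrow> 'g \<Rightarrow> bool" and N I :: "'p \<Rightarrow> 'g \<Rightarrow> real"
  assumes H: "\<forall>phs gs. (\<forall>j. Q (phs j) (gs j)) \<and> (\<lambda>j. N (phs j) (gs j)) \<longlonglongrightarrow> 0 \<longrightarrow>
      eventually (\<lambda>j. \<bar>I (phs j) (gs j)\<bar> \<le> C * (N (phs j) (gs j))\<^sup>2) sequentially"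
  shows "\<exists>\<eta>>0. \<forall>ph g. Q ph g \<and> \<bar>N ph g\<bar> < \<eta> \<longrightarrow> \<bar>I ph g\<bar> \<le> C * (N ph g)\<^sup>2"
proof (rule ccontr)
  assume "\<not> ?thesis"
  then have "\<forall>j::nat. \<exists>ph g. Q ph g \<and> \<bar>N ph g\<bar> < 1 / (Suc j) \<and> \<not> \<bar>I ph g\<bar> \<le> C * (N ph g)\<^sup>2"
    by (metis of_nat_0_less_iff zero_less_Suc divide_pos_pos zero_less_one)
  then obtain phs gs where S: "\<And>j. Q (phs j) (gs j)" "\<And>j. \<bar>N (phs j) (gs j)\<bar> < 1 / (Suc j)"
      "\<And>j. \<not> \<bar>I (phs j) (gs j)\<bar> \<le> C * (N (phs j) (gs j))\<^sup>2"
    by metis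
  have "(\<lambda>j. N (phs j) (gs j)) \<longlonglongrightarrow> 0"
  proof (rule tendsto_sandwich[of "\<lambda>j. - (1 / real (Suc j))" _ _ "\<lambda>j. 1 / real (Suc j)"])
    show "eventually (\<lambda>j. - (1 / real (Suc j)) \<le> N (phs j) (gs j)) sequentially"
    proof (intro always_eventually allI)
    fix j show "- (1 / real (Suc j)) \<le> N (phs j) (gs j)" using S(2)[of j] by linarith
  qed
    show "eventually (\<lambda>j. N (phs j) (gs j) \<le> 1 / real (Suc j)) sequentially"
      using S(2) by (auto simp: abs_less_iff less_imp_le)
    show "(\<lambda>j. 1 / real (Suc j)) \<longlonglongrightarrow> 0" by (rule LIMSEQ_Suc[OF lim_inverse_n']) 
    then show "(\<lambda>j. - (1 / real (Suc j))) \<longlonglongrightarrow> 0" using tendsto_minus by fastforce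
  qed
  then have "eventually (\<lambda>j. \<bar>I (phs j) (gs j)\<bar> \<le> C * (N (phs j) (gs j))\<^sup>2) sequentially"
    using H S(1) by blast
  then obtain j where "\<bar>I (phs j) (gs j)\<bar> \<le> C * (N (phs j) (gs j))\<^sup>2"
    using eventually_sequentially by auto
  with S(3) show False by blast
qed

lemma (in prob_space) bias_oP:
  assumes nr: "small_oP M nr (\<lambda>n. real n powr (-1/4))"
    and bm: "\<And>n. b n \<in> borel_measurable M"
    and C: "C > 0" and \<eta>: "\<eta> > 0"
    and unif: "\<And>n \<omega>. \<omega> \<in> space M \<Longrightarrow> \<bar>nr n \<omega>\<bar> < \<eta> \<Longrightarrow> \<bar>b n \<omega>\<bar> \<le> C * (nr n \<omega>)\<^sup>2"
  shows "oP M (\<lambda>n \<omega>. sqrt n * b n \<omega>)"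
proof (rule oP_I)
  have [measurable]: "nr n \<in> borel_measurable M" "b n \<in> borel_measurable M" for n
    using nr bm unfolding small_oP_def by auto
  show "(\<lambda>\<omega>. sqrt n * b n \<omega>) \<in> borel_measurable M" for n by simp
  fix e \<eta>' :: real assume e: "e > 0" and \<eta>': "\<eta>' > 0"
  define c where "c = sqrt (e / C)"
  have c: "c > 0" "c\<^sup>2 = e / C" using e C by (auto simp: c_def)
  have lim1: "(\<lambda>n. measure M {\<omega>\<in>space M. \<bar>nr n \<omega>\<bar> > c * real n powr (-1/4)}) \<longlonglongrightarrow> 0"
    using nr c unfolding small_oP_def by auto
  have lim2: "(\<lambda>n. measure M {\<omega>\<in>space M. \<bar>nr n \<omega>\<bar> > 1 * real n powr (-1/4)}) \<longlonglongrightarrow> 0"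
    using nr[unfolded small_oP_def, THEN conjunct2, rule_format, of 1] by simp
  have ev1: "eventually (\<lambda>n. measure M {\<omega>\<in>space M. \<bar>nr n \<omega>\<bar> > c * real n powr (-1/4)} < \<eta>'/2) sequentially"
    by (rule order_tendstoD(2)[OF lim1]) (use \<eta>' in simp)
  have ev2: "eventually (\<lambda>n. measure M {\<omega>\<in>space M. \<bar>nr n \<omega>\<bar> > 1 * real n powr (-1/4)} < \<eta>'/2) sequentially"
    by (rule order_tendstoD(2)[OF lim2]) (use \<eta>' in simp)
  have pw: "((\<lambda>n. real n powr (-1/4)) \<longlongrightarrow> 0) sequentially"
    by (intro tendsto_neg_powr filterlim_real_sequentially) auto
  have ev3: "eventually (\<lambda>n. real n powr (-1/4) < \<eta>) sequentially"
    using order_tendstoD(2)[OF pw \<eta>] .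
  have ev4: "eventually (\<lambda>n. n > 0) sequentially"
    by (rule eventually_gt_at_top)
  from ev1 ev2 ev3 ev4
  show "eventually (\<lambda>n. measure M {\<omega>\<in>space M. e < \<bar>sqrt n * b n \<omega>\<bar>} \<le> \<eta>') sequentially"
  proof eventually_elim
    case (elim n)
    have sub: "{\<omega>\<in>space M. e < \<bar>sqrt n * b n \<omega>\<bar>} \<subseteq>
       {\<omega>\<in>space M. \<bar>nr n \<omega>\<bar> > c * real n powr (-1/4)} \<union> {\<omega>\<in>space M. \<bar>nr n \<omega>\<bar> > 1 * real n powr (-1/4)}"
    proof safe
      fix \<omega> assume \<omega>: "\<omega> \<in> space M" and big: "e < \<bar>sqrt n * b n \<omega>\<bar>"
        and n1: "\<not> \<bar>nr n \<omega>\<bar> > 1 * real n powr (-1/4)"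
      have "\<bar>nr n \<omega>\<bar> < \<eta>" using n1 elim by simp
      then have bb: "\<bar>b n \<omega>\<bar> \<le> C * (nr n \<omega>)\<^sup>2" using unif \<omega> by simp
      have pq: "(real n powr (-1/4))\<^sup>2 * sqrt n = 1"
      proof -
        have "(real n powr (-1/4))\<^sup>2 = real n powr (-1/2)"
          using elim by (simp add: power2_eq_square powr_add[symmetric])
        then show ?thesis using elim
          by (simp add: powr_minus powr_half_sqrt[symmetric] divide_simps)
      qed
      show "\<bar>nr n \<omega>\<bar> > c * real n powr (-1/4)"
      proof (rule ccontr)
        assume "\<not> ?thesis"
        then have "\<bar>nr n \<omega>\<bar> \<le> c * real n powr (-1/4)" by simp
        then have "(nr n \<omega>)\<^sup>2 \<le> (c * real n powr (-1/4))\<^sup>2"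
          by (metis abs_ge_zero abs_le_square_iff abs_of_nonneg c(1) less_imp_le mult_nonneg_nonneg powr_ge_zero)
        then have "sqrt n * C * (nr n \<omega>)\<^sup>2 \<le> sqrt n * C * (c * real n powr (-1/4))\<^sup>2"
          using C by (intro mult_left_mono) auto
        also have "\<dots> = C * c\<^sup>2 * ((real n powr (-1/4))\<^sup>2 * sqrt n)"
          by (simp add: power_mult_distrib)
        also have "\<dots> = e" using pq c C by simp
        finally have "sqrt n * C * (nr n \<omega>)\<^sup>2 \<le> e" .
        moreover have "\<bar>sqrt n * b n \<omega>\<bar> \<le> sqrt n * C * (nr n \<omega>)\<^sup>2"
          using mult_left_mono[OF bb, of "sqrt n"] by (simp add: abs_mult mult.assoc)
        ultimately show False using big by simp
      qed
    qed
    have "measure M {\<omega>\<in>space M. e < \<bar>sqrt n * b n \<omega>\<bar>} \<le>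
       measure M ({\<omega>\<in>space M. \<bar>nr n \<omega>\<bar> > c * real n powr (-1/4)} \<union> {\<omega>\<in>space M. \<bar>nr n \<omega>\<bar> > 1 * real n powr (-1/4)})"
      by (rule finite_measure_mono[OF sub]) measurable
    also have "\<dots> \<le> measure M {\<omega>\<in>space M. \<bar>nr n \<omega>\<bar> > c * real n powr (-1/4)} + measure M {\<omega>\<in>space M. \<bar>nr n \<omega>\<bar> > 1 * real n powr (-1/4)}"
      by (rule measure_Un_le) measurable
    finally show ?case using elim by simp
  qed
qed

lemma (in prob_space) fluct_oP:
  fixes Z :: "nat \<Rightarrow> 'a \<Rightarrow> 'z" and P :: "'z measure" and JJ :: "nat \<Rightarrow> nat set"
    and F :: "nat \<Rightarrow> (nat \<Rightarrow> 'z) \<Rightarrow> 'z \<Rightarrow> real" and c :: "nat \<Rightarrow> real" and A B :: real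
  assumes P: "prob_space P"
    and Zind: "indep_vars (\<lambda>_. P) Z UNIV"
    and Zlaw: "\<And>i. distr M P (Z i) = P"
    and fin: "\<And>n. finite (JJ n)"
    and Fm: "\<And>n. (\<lambda>(v,z). F n v z) \<in> borel_measurable (PiM (UNIV - JJ n) (\<lambda>_. P) \<Otimes>\<^sub>M P)"
    and A: "A \<ge> 0" and cA: "\<And>n. (c n)\<^sup>2 \<le> A * real n"
    and B: "B > 0" and size: "eventually (\<lambda>n. real n \<le> B * real (card (JJ n))) sequentially"
    and q: "\<And>\<delta>. \<delta> > 0 \<Longrightarrow> (\<lambda>n. measure M {\<omega>\<in>space M. ennreal \<delta> <
         (\<integral>\<^sup>+z. ennreal ((F n (restrict (\<lambda>i. Z i \<omega>) (UNIV - JJ n)) z)\<^sup>2) \<partial>P)}) \<longlonglongrightarrow> 0"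
  shows "oP M (\<lambda>n \<omega>. c n * ((\<Sum>i\<in>JJ n. F n (restrict (\<lambda>i. Z i \<omega>) (UNIV - JJ n)) (Z i \<omega>)
             - (\<integral>z. F n (restrict (\<lambda>i. Z i \<omega>) (UNIV - JJ n)) z \<partial>P)) / card (JJ n)))"
proof -
  interpret P: prob_space P by fact
  define V where "V n \<omega> = restrict (\<lambda>i. Z i \<omega>) (UNIV - JJ n)" for n \<omega>
  define W where "W n \<omega> = restrict (\<lambda>i. Z i \<omega>) (JJ n)" for n \<omega>
  define S where "S n \<omega> = (\<Sum>i\<in>JJ n. F n (V n \<omega>) (Z i \<omega>) - (\<integral>z. F n (V n \<omega>) z \<partial>P))" for n \<omega>
  define qq where "qq n \<omega> = (\<integral>\<^sup>+z. ennreal ((F n (V n \<omega>) z)\<^sup>2) \<partial>P)" for n \<omega>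
  have Zm[measurable]: "Z i \<in> measurable M P" for i using Zind unfolding indep_vars_def by auto
  have Vm[measurable]: "V n \<in> measurable M (PiM (UNIV - JJ n) (\<lambda>_. P))" for n
    unfolding V_def by measurable
  have Fm'[measurable]: "(\<lambda>x. F n (f x) (g x)) \<in> borel_measurable N"
    if "f \<in> measurable N (PiM (UNIV - JJ n) (\<lambda>_. P))" "g \<in> measurable N P" for f g N n
    using measurable_compose[OF measurable_Pair[OF that] Fm[of n]] by simp
  have intm[measurable]: "(\<lambda>v. \<integral>z. F n v z \<partial>P) \<in> borel_measurable (PiM (UNIV - JJ n) (\<lambda>_. P))" for n
    by (rule P.borel_measurable_lebesgue_integral) (use Fm in simp)
  have Sm[measurable]: "S n \<in> borel_measurable M" for n
    unfolding S_def by measurable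
  have qqm[measurable]: "qq n \<in> borel_measurable M" for n
  proof -
    have "(\<lambda>v. \<integral>\<^sup>+z. ennreal ((F n v z)\<^sup>2) \<partial>P) \<in> borel_measurable (PiM (UNIV - JJ n) (\<lambda>_. P))"
      by (rule P.borel_measurable_nn_integral) (use Fm in measurable)
    then show ?thesis unfolding qq_def using measurable_compose[OF Vm] by blast
  qed
  have eqS: "(\<lambda>n \<omega>. c n * ((\<Sum>i\<in>JJ n. F n (restrict (\<lambda>i. Z i \<omega>) (UNIV - JJ n)) (Z i \<omega>)
             - (\<integral>z. F n (restrict (\<lambda>i. Z i \<omega>) (UNIV - JJ n)) z \<partial>P)) / card (JJ n)))
      = (\<lambda>n \<omega>. c n * (S n \<omega> / card (JJ n)))"
    by (simp add: S_def V_def)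
  have bound: "prob {\<omega>\<in>space M. e' < \<bar>S n \<omega>\<bar> \<and> qq n \<omega> \<le> ennreal \<delta>} \<le> real (card (JJ n)) * \<delta> / e'\<^sup>2"
    if e': "e' > 0" and \<delta>: "\<delta> \<ge> 0" and ne: "JJ n \<noteq> {}" for e' \<delta> n
  proof -
    have ind: "indep_var (PiM (UNIV - JJ n) (\<lambda>_. P)) (V n) (PiM (JJ n) (\<lambda>_. P)) (W n)"
      unfolding V_def W_def by (rule indep_var_restrict[OF Zind]) auto
    have rv: "random_variable P (Z i)" if "i \<in> JJ n" for i by simp
    have "distr M (PiM (JJ n) (\<lambda>_. P)) (W n) = PiM (JJ n) (\<lambda>i. distr M P (Z i))"
      unfolding W_def
      using indep_vars_iff_distr_eq_PiM'[where I="JJ n" and M'="\<lambda>_. P" and X=Z, OF ne rv] indep_vars_subset[OF Zind] by auto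
    also have "\<dots> = PiM (JJ n) (\<lambda>_. P)" by (simp add: Zlaw)
    finally have WD: "distr M (PiM (JJ n) (\<lambda>_. P)) (W n) = PiM (JJ n) (\<lambda>_. P)" .
    have "{\<omega>\<in>space M. e' < \<bar>S n \<omega>\<bar> \<and> qq n \<omega> \<le> ennreal \<delta>} =
      {\<omega>\<in>space M. e' < \<bar>\<Sum>i\<in>JJ n. F n (V n \<omega>) (W n \<omega> i) - (\<integral>z. F n (V n \<omega>) z \<partial>P)\<bar> \<and>
                 (\<integral>\<^sup>+z. ennreal ((F n (V n \<omega>) z)\<^sup>2) \<partial>P) \<le> ennreal \<delta>}"
      unfolding S_def qq_def W_def by (auto intro!: sum.cong)
    also have "prob \<dots> \<le> real (card (JJ n)) * \<delta> / e'\<^sup>2"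
      by (rule fluct_bound[OF P ind WD Fm fin e' \<delta>])
    finally show ?thesis .
  qed
  show ?thesis unfolding eqS
  proof (rule oP_I)
    show "(\<lambda>\<omega>. c n * (S n \<omega> / real (card (JJ n)))) \<in> borel_measurable M" for n by simp
    fix e \<eta> :: real assume e: "e > 0" and \<eta>: "\<eta> > 0"
    have AB: "A * B \<ge> 0" using A B by simp
    define D where "D = 2 * (A * B + 1)"
    have D: "D > 0" unfolding D_def using AB by simp
    define \<delta> where "\<delta> = \<eta> * e\<^sup>2 / D"
    have \<delta>: "\<delta> > 0" unfolding \<delta>_def using e \<eta> D by simp
    have \<delta>AB: "\<delta> * A * B / e\<^sup>2 \<le> \<eta> / 2"
    proof -
      have "\<delta> * A * B / e\<^sup>2 = \<eta> * (A * B) / D"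
        unfolding \<delta>_def using e D by (simp add: field_simps)
      also have "\<dots> \<le> \<eta> / 2"
        using D \<eta> AB unfolding D_def by (simp add: divide_simps)
      finally show ?thesis .
    qed
    have ql: "(\<lambda>n. measure M {\<omega>\<in>space M. ennreal \<delta> < qq n \<omega>}) \<longlonglongrightarrow> 0"
      using q[OF \<delta>] by (simp add: qq_def V_def)
    have evq: "eventually (\<lambda>n. measure M {\<omega>\<in>space M. ennreal \<delta> < qq n \<omega>} < \<eta>/2) sequentially"
      by (rule order_tendstoD(2)[OF ql]) (use \<eta> in simp)
    from evq size eventually_gt_at_top[of 0]
    show "eventually (\<lambda>n. measure M {\<omega>\<in>space M. e < \<bar>c n * (S n \<omega> / real (card (JJ n)))\<bar>} \<le> \<eta>) sequentially"
    proof eventually_elim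
      case (elim n)
      have ne: "JJ n \<noteq> {}" using elim B by (auto intro: ccontr)
      have cpos: "card (JJ n) > 0" using ne fin by (simp add: card_gt_0_iff)
      show ?case
      proof (cases "c n = 0")
        case True then show ?thesis using \<eta> e by (simp add: not_less[symmetric])
      next
        case False
        define e' where "e' = e * card (JJ n) / \<bar>c n\<bar>"
        have e': "e' > 0" unfolding e'_def using e cpos False by simp
        have sub: "{\<omega>\<in>space M. e < \<bar>c n * (S n \<omega> / real (card (JJ n)))\<bar>} \<subseteq>
          {\<omega>\<in>space M. e' < \<bar>S n \<omega>\<bar> \<and> qq n \<omega> \<le> ennreal \<delta>} \<union> {\<omega>\<in>space M. ennreal \<delta> < qq n \<omega>}"
        proof safe
          fix \<omega> assume "\<omega> \<in> space M" "e < \<bar>c n * (S n \<omega> / real (card (JJ n)))\<bar>"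
          then show "e' < \<bar>S n \<omega>\<bar>"
            unfolding e'_def using cpos False by (simp add: abs_mult field_simps)
        qed auto
        have "measure M {\<omega>\<in>space M. e < \<bar>c n * (S n \<omega> / real (card (JJ n)))\<bar>} \<le>
          measure M ({\<omega>\<in>space M. e' < \<bar>S n \<omega>\<bar> \<and> qq n \<omega> \<le> ennreal \<delta>} \<union> {\<omega>\<in>space M. ennreal \<delta> < qq n \<omega>})"
          by (rule finite_measure_mono[OF sub]) measurable
        also have "\<dots> \<le> prob {\<omega>\<in>space M. e' < \<bar>S n \<omega>\<bar> \<and> qq n \<omega> \<le> ennreal \<delta>} + prob {\<omega>\<in>space M. ennreal \<delta> < qq n \<omega>}"
          by (rule measure_Un_le) measurable
        also have "prob {\<omega>\<in>space M. e' < \<bar>S n \<omega>\<bar> \<and> qq n \<omega> \<le> ennreal \<delta>} \<le> real (card (JJ n)) * \<delta> / e'\<^sup>2"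
          using bound[OF e' _ ne, of \<delta>] \<delta> by simp
        also have "real (card (JJ n)) * \<delta> / e'\<^sup>2 = \<delta> * (c n)\<^sup>2 / (e\<^sup>2 * card (JJ n))"
          unfolding e'_def using cpos False e by (simp add: field_simps power2_eq_square)
        also have "\<dots> \<le> \<delta> * (A * real n) / (e\<^sup>2 * card (JJ n))"
          using cA[of n] \<delta> e cpos by (intro divide_right_mono mult_left_mono) auto
        also have "\<dots> \<le> \<delta> * (A * (B * real (card (JJ n)))) / (e\<^sup>2 * card (JJ n))"
          using elim A \<delta> e cpos by (intro divide_right_mono mult_left_mono) auto
        also have "\<dots> = \<delta> * A * B / e\<^sup>2"
          using cpos by (simp add: field_simps)
        finally show ?thesis using \<delta>AB elim(1) by linarith
      qed
    qed
  qed
qed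

lemma card_asym:
  fixes m a ob :: "nat \<Rightarrow> nat" and K :: nat and \<tau> :: real
  assumes K: "K > 0" and mlim: "(\<lambda>n. real (m n) / real n) \<longlonglongrightarrow> 1 / K"
    and olim: "(\<lambda>n. real (ob n) / real (a n + ob n)) \<longlonglongrightarrow> \<tau>"
    and \<tau>: "0 \<le> \<tau>" "\<tau> < 1" and meq: "\<And>n. m n = 2 * a n + ob n"
  shows "(\<lambda>n. real (a n) / real n) \<longlonglongrightarrow> (1 - \<tau>) / (K * (2 - \<tau>))"
    and "(\<lambda>n. real (ob n) / real n) \<longlonglongrightarrow> \<tau> / (K * (2 - \<tau>))"
proof -
  let ?\<rho> = "\<lambda>n. real (ob n) / real (a n + ob n)"
  have "eventually (\<lambda>n. real (m n) / real n > 0) sequentially"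
    by (rule order_tendstoD(1)[OF mlim]) (use K in simp)
  then have evm: "eventually (\<lambda>n. a n + ob n > 0) sequentially"
    by eventually_elim (auto simp: meq intro: ccontr)
  have eq: "eventually (\<lambda>n. real (a n) / real n = (real (m n) / real n) * ((1 - ?\<rho> n) / (2 - ?\<rho> n))) sequentially"
    using evm
  proof eventually_elim
    case (elim n)
    then have p: "real (a n + ob n) > 0" by (metis of_nat_0_less_iff)
    have "1 - ?\<rho> n = real (a n) / real (a n + ob n)" using p by (simp add: field_simps)
    moreover have "2 - ?\<rho> n = real (m n) / real (a n + ob n)" using p by (simp add: field_simps meq)
    moreover have "m n > 0" using elim meq[of n] by linarith
    then have mp: "real (m n) > 0" by simp
    ultimately have "(1 - ?\<rho> n) / (2 - ?\<rho> n) = real (a n) / real (m n)"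
      using p by simp
    then show ?case using mp by simp
  qed
  have "(\<lambda>n. (real (m n) / real n) * ((1 - ?\<rho> n) / (2 - ?\<rho> n))) \<longlonglongrightarrow> (1 / K) * ((1 - \<tau>) / (2 - \<tau>))"
    by (intro tendsto_intros mlim olim) (use \<tau> in simp)
  then show A: "(\<lambda>n. real (a n) / real n) \<longlonglongrightarrow> (1 - \<tau>) / (K * (2 - \<tau>))"
    using Lim_transform_eventually[OF _ eq[THEN eventually_mono, OF sym]] by simp
  have eq2: "real (ob n) / real n = real (m n) / real n - 2 * (real (a n) / real n)" for n
    by (simp add: meq add_divide_distrib)
  have "(\<lambda>n. real (m n) / real n - 2 * (real (a n) / real n)) \<longlonglongrightarrow> 1 / K - 2 * ((1 - \<tau>) / (K * (2 - \<tau>)))"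
    by (intro tendsto_intros mlim A)
  moreover have "1 / K - 2 * ((1 - \<tau>) / (K * (2 - \<tau>))) = \<tau> / (K * (2 - \<tau>))"
    using K \<tau> by (simp add: field_simps)
  ultimately show "(\<lambda>n. real (ob n) / real n) \<longlonglongrightarrow> \<tau> / (K * (2 - \<tau>))"
    unfolding eq2 by simp
qed

lemma ratio_bound:
  assumes "(\<lambda>n. real (a n) / real n) \<longlonglongrightarrow> \<alpha>" "\<alpha> > 0"
  shows "eventually (\<lambda>n. real n \<le> (2 / \<alpha>) * real (a n)) sequentially"
proof -
  have "eventually (\<lambda>n. real (a n) / real n > \<alpha> / 2) sequentially"
    by (rule order_tendstoD(1)[OF assms(1)]) (use assms(2) in simp)
  with eventually_gt_at_top[of 0] show ?thesis
  proof eventually_elim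
    case (elim n)
    then have "real (a n) > \<alpha> / 2 * real n" by (simp add: field_simps)
    then show ?case using assms(2) by (simp add: field_simps)
  qed
qed

lemma sum_disj_family:
  assumes fin: "\<And>k. k \<in> KK \<Longrightarrow> finite (S k)" and "finite KK" and dj: "disjoint_family_on S KK"
  shows "(\<Sum>k\<in>KK. \<Sum>i\<in>S k. f k i) = (\<Sum>i\<in>(\<Union>k\<in>KK. S k). f (THE k. k \<in> KK \<and> i \<in> S k) i)"
proof -
  have "(\<Sum>i\<in>(\<Union>k\<in>KK. S k). f (THE k. k \<in> KK \<and> i \<in> S k) i) = (\<Sum>k\<in>KK. \<Sum>i\<in>S k. f (THE k. k \<in> KK \<and> i \<in> S k) i)"
    by (rule sum.UNION_disjoint_family) (use assms in auto)
  also have "\<dots> = (\<Sum>k\<in>KK. \<Sum>i\<in>S k. f k i)"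
  proof (intro sum.cong refl)
    fix k i assume k: "k \<in> KK" and i: "i \<in> S k"
    have "(THE k. k \<in> KK \<and> i \<in> S k) = k"
      using dj k i by (intro the_equality) (auto simp: disjoint_family_on_def)
    then show "f (THE k. k \<in> KK \<and> i \<in> S k) i = f k i" by simp
  qed
  finally show ?thesis by simp
qed

context iidz begin

lemma sq_family:
  assumes fin: "\<And>k. k \<in> KK \<Longrightarrow> finite (S k)" and "finite KK" and dj: "disjoint_family_on S KK"
  shows "integrable M (\<lambda>\<omega>. (\<Sum>k\<in>KK. \<Sum>i\<in>S k. g k i * \<zeta> i \<omega>)\<^sup>2)"
    and "expectation (\<lambda>\<omega>. (\<Sum>k\<in>KK. \<Sum>i\<in>S k. g k i * \<zeta> i \<omega>)\<^sup>2) = (\<Sum>k\<in>KK. \<Sum>i\<in>S k. (g k i)\<^sup>2) * s2"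
proof -
  let ?U = "\<Union>k\<in>KK. S k" and ?c = "\<lambda>i. g (THE k. k \<in> KK \<and> i \<in> S k) i"
  have fU: "finite ?U" using assms by auto
  have e1: "(\<Sum>k\<in>KK. \<Sum>i\<in>S k. g k i * \<zeta> i \<omega>) = (\<Sum>i\<in>?U. ?c i * \<zeta> i \<omega>)" for \<omega>
    using sum_disj_family[OF assms, of "\<lambda>k i. g k i * \<zeta> i \<omega>"] by auto
  have e2: "(\<Sum>k\<in>KK. \<Sum>i\<in>S k. (g k i)\<^sup>2) = (\<Sum>i\<in>?U. (?c i)\<^sup>2)"
    using sum_disj_family[OF assms, of "\<lambda>k i. (g k i)\<^sup>2"] by auto
  show "integrable M (\<lambda>\<omega>. (\<Sum>k\<in>KK. \<Sum>i\<in>S k. g k i * \<zeta> i \<omega>)\<^sup>2)"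
    unfolding e1 by (rule sq_lin(1)[OF fU])
  show "expectation (\<lambda>\<omega>. (\<Sum>k\<in>KK. \<Sum>i\<in>S k. g k i * \<zeta> i \<omega>)\<^sup>2) = (\<Sum>k\<in>KK. \<Sum>i\<in>S k. (g k i)\<^sup>2) * s2"
    unfolding e1 e2 by (rule sq_lin(2)[OF fU])
qed

end

lemma avg_split:
  fixes J :: "nat set" and z dl :: "nat \<Rightarrow> real"
  assumes "finite J"
  shows "(\<Sum>i\<in>J. \<mu> + z i + dl i) / card J = (\<Sum>i\<in>J. z i) / card J + (\<Sum>i\<in>J. dl i - b) / card J
          + (if J = {} then 0 else \<mu> + b)"
proof (cases "J = {}")
  case True then show ?thesis by simp
next
  case False
  then have c: "real (card J) > 0" using assms by (simp add: card_gt_0_iff)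
  have "(\<Sum>i\<in>J. \<mu> + z i + dl i) = (\<Sum>i\<in>J. z i) + (\<Sum>i\<in>J. dl i - b) + card J * (\<mu> + b)"
    by (simp add: sum.distrib sum_subtractf algebra_simps)
  then show ?thesis using c False by (simp add: add_divide_distrib)
qed

lemma fold_identity:
  fixes Jo Ja Jb :: "nat set" and z dd dm :: "nat \<Rightarrow> real" and \<mu> bd bm \<tau> :: real
  assumes f: "finite Jo" "finite Ja" "finite Jb" and c: "card Ja = card Jb"
  shows "(\<tau> * ((\<Sum>i\<in>Jo. \<mu> + z i + dd i) / card Jo) + (1-\<tau>) * ((\<Sum>i\<in>Ja. \<mu> + z i + dd i) / card Ja))
       - (\<tau> * ((\<Sum>i\<in>Jo. \<mu> + z i + dm i) / card Jo) + (1-\<tau>) * ((\<Sum>i\<in>Jb. \<mu> + z i + dm i) / card Jb))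
     = (1-\<tau>) * (((\<Sum>i\<in>Ja. z i) - (\<Sum>i\<in>Jb. z i)) / card Ja)
       + (\<tau> * ((\<Sum>i\<in>Jo. dd i - bd) / card Jo) - \<tau> * ((\<Sum>i\<in>Jo. dm i - bm) / card Jo)
       + (1-\<tau>) * ((\<Sum>i\<in>Ja. dd i - bd) / card Ja) - (1-\<tau>) * ((\<Sum>i\<in>Jb. dm i - bm) / card Jb)
       + (if Jo = {} then 0 else \<tau> * (bd - bm)) + (if Ja = {} then 0 else (1-\<tau>) * (bd - bm)))"
proof -
  have ab: "Ja = {} \<longleftrightarrow> Jb = {}" using f c by (metis card_eq_0_iff)
  show ?thesis
    unfolding avg_split[OF f(1), of \<mu> z dd bd] avg_split[OF f(2), of \<mu> z dd bd]
      avg_split[OF f(1), of \<mu> z dm bm] avg_split[OF f(3), of \<mu> z dm bm]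
    using ab c by (simp add: diff_divide_distrib algebra_simps)
qed

lemma lim_corr:
  fixes a N :: "nat \<Rightarrow> real" and K \<tau> s2 :: real
  assumes K: "K > 0" and \<tau>: "0 \<le> \<tau>" "\<tau> < 1" and s2: "s2 > 0"
    and la: "(\<lambda>n. a n / real n) \<longlonglongrightarrow> (1-\<tau>)/(K*(2-\<tau>))"
    and lN: "(\<lambda>n. N n / real n) \<longlonglongrightarrow> K * ((1-\<tau>)/(K*(2-\<tau>)))"
    and pos: "\<And>n. a n \<ge> 0" "\<And>n. N n \<ge> 0"
  shows "(\<lambda>n. a n * (sqrt (real n / (2-\<tau>)) * (1/K) * (1-\<tau>) / a n - sqrt (2*(1-\<tau>)* s2) / sqrt (2* s2*N n))\<^sup>2) \<longlonglongrightarrow> 0"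
proof -
  define \<alpha> where "\<alpha> = (1-\<tau>)/(K*(2-\<tau>))"
  have \<alpha>: "\<alpha> > 0" unfolding \<alpha>_def using K \<tau> by simp
  define w where "w n = sqrt (real n / (2-\<tau>)) * (1/K) * (1-\<tau>) / a n" for n
  define r where "r n = sqrt (2*(1-\<tau>)* s2) / sqrt (2* s2*N n)" for n
  have w0: "w n \<ge> 0" for n unfolding w_def using \<tau> K pos by simp
  have r0: "r n \<ge> 0" for n unfolding r_def using \<tau> s2 pos[of n] by (intro divide_nonneg_nonneg real_sqrt_ge_zero) auto
  have eva: "eventually (\<lambda>n. a n / real n > \<alpha>/2) sequentially"
    by (rule order_tendstoD(1)[OF la[folded \<alpha>_def]]) (use \<alpha> in simp)
  have evN: "eventually (\<lambda>n. N n / real n > K * \<alpha> / 2) sequentially"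
    by (rule order_tendstoD(1)[OF lN[folded \<alpha>_def]]) (use \<alpha> K in simp)
  have ev: "eventually (\<lambda>n. n > 0 \<and> a n > 0 \<and> N n > 0) sequentially"
    using eva evN eventually_gt_at_top[of 0]
  proof eventually_elim
    case (elim n)
    have "a n / real n > \<alpha>/2" "N n / real n > K * \<alpha> / 2" using elim by auto
    moreover have "\<alpha>/2 > 0" "K * \<alpha> / 2 > 0" using \<alpha> K by auto
    ultimately have "a n / real n > 0" "N n / real n > 0" by linarith+
    then show ?case using elim pos[of n] by (auto simp: zero_less_divide_iff)
  qed
  define c1 where "c1 = (1-\<tau>)\<^sup>2 / ((2-\<tau>) * K\<^sup>2)"
  have e1: "eventually (\<lambda>n. a n * (w n)\<^sup>2 = c1 / (a n / real n)) sequentially"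
    using ev
  proof eventually_elim
    case (elim n)
    have sq: "(sqrt (real n / (2-\<tau>)))\<^sup>2 = real n / (2-\<tau>)" using \<tau> by simp
    have "(w n)\<^sup>2 = (real n / (2-\<tau>)) * (1/K)\<^sup>2 * (1-\<tau>)\<^sup>2 / (a n)\<^sup>2"
      unfolding w_def by (simp add: power_mult_distrib power_divide sq)
    then show ?case using \<tau> K elim
      by (simp add: c1_def field_simps power2_eq_square)
  qed
  have l1: "(\<lambda>n. a n * (w n)\<^sup>2) \<longlonglongrightarrow> c1 / \<alpha>"
    using Lim_transform_eventually[OF tendsto_divide[OF tendsto_const la[folded \<alpha>_def]] e1[THEN eventually_mono, OF sym]] \<alpha> by simp
  have c1\<alpha>: "c1 / \<alpha> = (1-\<tau>)/K"
  proof -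
    have nz: "1 - \<tau> \<noteq> 0" "2 - \<tau> \<noteq> 0" "K \<noteq> 0" using \<tau> K by auto
    show ?thesis unfolding c1_def \<alpha>_def using nz by (simp add: power2_eq_square)
  qed
  have e2: "eventually (\<lambda>n. a n * (r n)\<^sup>2 = (1-\<tau>) * ((a n / real n) / (N n / real n))) sequentially"
    using ev
  proof eventually_elim
    case (elim n)
    then show ?case using \<tau> s2 pos[of n]
      by (simp add: r_def power_divide real_sqrt_mult field_simps)
  qed
  have l2': "(\<lambda>n. (1-\<tau>) * ((a n / real n) / (N n / real n))) \<longlonglongrightarrow> (1-\<tau>) * (\<alpha> / (K * \<alpha>))"
    by (intro tendsto_intros la[folded \<alpha>_def] lN[folded \<alpha>_def]) (use \<alpha> K in simp)
  have l2: "(\<lambda>n. a n * (r n)\<^sup>2) \<longlonglongrightarrow> (1-\<tau>) * (\<alpha> / (K * \<alpha>))"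
    by (rule Lim_transform_eventually[OF l2' e2[THEN eventually_mono, OF sym]])
  have c2: "(1-\<tau>) * (\<alpha> / (K * \<alpha>)) = (1-\<tau>)/K" using \<alpha> K by simp
  have e3: "a n * w n * r n = sqrt ((a n * (w n)\<^sup>2) * (a n * (r n)\<^sup>2))" for n
  proof -
    have "(a n * (w n)\<^sup>2) * (a n * (r n)\<^sup>2) = (a n * w n * r n)\<^sup>2"
      by (simp only: power2_eq_square ac_simps)
    then have "sqrt ((a n * (w n)\<^sup>2) * (a n * (r n)\<^sup>2)) = \<bar>a n * w n * r n\<bar>"
      by (simp only: real_sqrt_abs)
    then show ?thesis using pos[of n] w0[of n] r0[of n] by simp
  qed
  have l3: "(\<lambda>n. a n * w n * r n) \<longlonglongrightarrow> sqrt ((1-\<tau>)/K * ((1-\<tau>)/K))"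
    unfolding e3 using l1 l2 c1\<alpha> c2 by (intro tendsto_real_sqrt tendsto_mult) auto
  have s3: "sqrt ((1-\<tau>)/K * ((1-\<tau>)/K)) = (1-\<tau>)/K"
  proof -
    have "sqrt ((1-\<tau>)/K * ((1-\<tau>)/K)) = \<bar>(1-\<tau>)/K\<bar>" by (rule real_sqrt_abs2)
    then show ?thesis using \<tau> K by simp
  qed
  have "(\<lambda>n. a n * (w n)\<^sup>2 - 2 * (a n * w n * r n) + a n * (r n)\<^sup>2) \<longlonglongrightarrow> (1-\<tau>)/K - 2 * ((1-\<tau>)/K) + (1-\<tau>)/K"
    using l1 l2 l3 c1\<alpha> c2 s3 by (intro tendsto_intros) auto
  moreover have "a n * (w n)\<^sup>2 - 2 * (a n * w n * r n) + a n * (r n)\<^sup>2 = a n * (w n - r n)\<^sup>2" for n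
    by (simp add: power2_diff algebra_simps)
  ultimately show ?thesis by (simp add: w_def r_def)
qed

lemma measurable_PiM_UNIV:
  assumes "\<And>i. (\<lambda>\<omega>. f \<omega> i) \<in> measurable N (Mi i)"
  shows "f \<in> measurable N (PiM UNIV Mi)"
proof -
  have "(\<lambda>\<omega> i. f \<omega> i) \<in> measurable N (PiM UNIV Mi)"
    by (rule measurable_PiM_single') (use assms measurable_space[OF assms] in \<open>auto simp: PiE_def extensional_def\<close>)
  then show ?thesis by simp
qed

theorem theorem1:
  fixes M :: "'a measure" and MX :: "'x measure" and MY :: "'y measure"
    and R :: "nat \<Rightarrow> 'a \<Rightarrow> nat \<Rightarrow> real" and X :: "nat \<Rightarrow> 'a \<Rightarrow> 'x" and Y :: "nat \<Rightarrow> 'a \<Rightarrow> 'y"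
    and P :: "((nat \<Rightarrow> real) \<times> 'x \<times> 'y) measure"
    and l :: "'y \<Rightarrow> 'yh::real_normed_vector \<Rightarrow> real"
    and G :: "((nat \<Rightarrow> real) \<Rightarrow> 'yh) set"
    and dmax d K :: nat and tau :: real
    and gstar :: "(nat \<Rightarrow> real) \<Rightarrow> 'yh"
    and nrm :: "((nat \<Rightarrow> real) \<times> 'x \<times> 'y \<Rightarrow> 'yh) \<Rightarrow> real"
    and I Ia Ib Io :: "nat \<Rightarrow> nat \<Rightarrow> nat set"
    and phihat :: "nat \<Rightarrow> nat \<Rightarrow> (nat \<Rightarrow> 'x \<times> 'y) \<Rightarrow> 'x \<Rightarrow> nat \<Rightarrow> real"
    and ghat :: "nat \<Rightarrow> nat \<Rightarrow> nat \<Rightarrow> (nat \<Rightarrow> 'x \<times> 'y) \<Rightarrow> (nat \<Rightarrow> real) \<Rightarrow> 'yh"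
  assumes M: "prob_space M"
    (* Z_i = (R_i, X_i, Y_i) i.i.d. with law P *)
    and Z_meas: "\<forall>i. (\<lambda>\<omega>. (R i \<omega>, X i \<omega>, Y i \<omega>)) \<in> measurable M (MR \<Otimes>\<^sub>M MX \<Otimes>\<^sub>M MY)"
    and Z_indep: "prob_space.indep_vars M (\<lambda>_. MR \<Otimes>\<^sub>M MX \<Otimes>\<^sub>M MY)
                    (\<lambda>i \<omega>. (R i \<omega>, X i \<omega>, Y i \<omega>)) UNIV"
    and Z_law: "\<forall>i. distr M (MR \<Otimes>\<^sub>M MX \<Otimes>\<^sub>M MY) (\<lambda>\<omega>. (R i \<omega>, X i \<omega>, Y i \<omega>)) = P"
    (* loss, model class *)
    and l_meas: "(\<lambda>(y, yh). l y yh) \<in> borel_measurable (MY \<Otimes>\<^sub>M borel)"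
    and G_meas: "G \<subseteq> borel_measurable MR"
    and G_dom: "G \<subseteq> Gd G dmax"
    and G_int: "\<forall>g\<in>G. integrable P (\<lambda>z. l (snd (snd z)) (g (fst z)))"
    and attained: "\<forall>d'\<le>dmax. \<exists>g\<in>Gd G d'. \<forall>g'\<in>Gd G d'. risk P l g \<le> risk P l g'"
    and gstar: "gstar \<in> Gd G (dstar P l G dmax)"
               "risk P l gstar = Lmin P l G (dstar P l G dmax)"
    and var_fin: "integrable P (\<lambda>z. (l (snd (snd z)) (gstar (fst z)))\<^sup>2)"
    (* null hypothesis *)
    and d: "dstar P l G dmax \<le> d" "d \<le> dmax"
    and K: "K \<ge> 2" and tau: "0 \<le> tau" "tau < 1"
    (* folds *)
    and folds_cover: "\<forall>n. (\<Union>k<K. I n k) = {..<n}"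
    and folds_disj: "\<forall>n. disjoint_family_on (I n) {..<K}"
    and folds_size: "\<forall>k<K. (\<lambda>n. real (card (I n k)) / real n) \<longlonglongrightarrow> 1 / real K"
    and split_cover: "\<forall>n. \<forall>k<K. Ia n k \<union> Ib n k \<union> Io n k = I n k"
    and split_disj: "\<forall>n. \<forall>k<K. Ia n k \<inter> Ib n k = {} \<and> Ia n k \<inter> Io n k = {} \<and> Ib n k \<inter> Io n k = {}"
    and split_ab: "\<forall>n. \<forall>k<K. card (Ia n k) = card (Ib n k)"
    and split_o: "\<forall>k<K. (\<lambda>n. real (card (Io n k)) / real (card (Ia n k) + card (Io n k))) \<longlonglongrightarrow> tau"
    (* estimators use only the training data I_{-k} *)
    and train_only: "\<forall>n. \<forall>k<K. \<forall>D D'. (\<forall>i\<in>{..<n} - I n k. D i = D' i) \<longrightarrow>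
                        phihat n k D = phihat n k D' \<and> (\<forall>d'. ghat n k d' D = ghat n k d' D')"
    and ghat_in: "\<forall>n. \<forall>k<K. \<forall>d'\<le>dmax. \<forall>D. ghat n k d' D \<in> Gd G d'"
    and phihat_meas: "\<forall>n. \<forall>k<K. (\<lambda>(D, x). phihat n k D x)
                        \<in> measurable (PiM UNIV (\<lambda>_. MX \<Otimes>\<^sub>M MY) \<Otimes>\<^sub>M MX) MR"
    and ghat_meas: "\<forall>n. \<forall>k<K. \<forall>d'\<le>dmax. (\<lambda>(D, r). ghat n k d' D r)
                        \<in> borel_measurable (PiM UNIV (\<lambda>_. MX \<Otimes>\<^sub>M MY) \<Otimes>\<^sub>M MR)"
    (* (C1) *)
    and C1: "\<forall>d'. dstar P l G dmax \<le> d' \<and> d' \<le> dmax \<longrightarrow> (\<exists>C>0. \<forall>phs gs.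
               (\<forall>j. phs j \<in> measurable MX MR \<and> gs j \<in> Gd G d') \<and>
               (\<lambda>j. nrm (\<lambda>z. gs j (phs j (fst (snd z))) - gstar (fst z))) \<longlonglongrightarrow> 0 \<longrightarrow>
               (\<forall>\<^sub>F j in sequentially.
                  \<bar>\<integral>z. l (snd (snd z)) (gs j (phs j (fst (snd z)))) - l (snd (snd z)) (gstar (fst z)) \<partial>P\<bar>
                  \<le> C * (nrm (\<lambda>z. gs j (phs j (fst (snd z))) - gstar (fst z)))\<^sup>2))"
    (* (C2) *)
    and C2: "\<forall>d'. dstar P l G dmax \<le> d' \<and> d' \<le> dmax \<longrightarrow> (\<forall>k<K.
               small_oP M (\<lambda>n \<omega>. nrm (\<lambda>z. ghat n k d' (\<lambda>i. (X i \<omega>, Y i \<omega>))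
                                  (phihat n k (\<lambda>i. (X i \<omega>, Y i \<omega>)) (fst (snd z))) - gstar (fst z)))
                          (\<lambda>n. real n powr (-1/4)))"
    (* (C3) *)
    and C3: "\<forall>d'. dstar P l G dmax \<le> d' \<and> d' \<le> dmax \<longrightarrow> (\<forall>k<K.
               small_oP1_enn M (\<lambda>n \<omega>. \<integral>\<^sup>+ z. ennreal
                  ((l (snd (snd z)) (ghat n k d' (\<lambda>i. (X i \<omega>, Y i \<omega>))
                        (phihat n k (\<lambda>i. (X i \<omega>, Y i \<omega>)) (fst (snd z))))
                    - l (snd (snd z)) (gstar (fst z)))\<^sup>2) \<partial>P))"
  shows "weak_conv_m
           (\<lambda>n. distr M borel (\<lambda>\<omega>.
              sqrt (real n / (2 - tau)) *
              ((1 / real K) * (\<Sum>k<K.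
                 let D = (\<lambda>i. (X i \<omega>, Y i \<omega>)); ph = phihat n k D;
                     gd = ghat n k d D; gm = ghat n k dmax D
                 in (tau * emp_loss l ph gd D (Io n k) + (1 - tau) * emp_loss l ph gd D (Ia n k))
                    - (tau * emp_loss l ph gm D (Io n k) + (1 - tau) * emp_loss l ph gm D (Ib n k))))))
           (gauss0 (2 * (1 - tau) *
              (\<integral>z. (l (snd (snd z)) (gstar (fst z)) - (\<integral>w. l (snd (snd w)) (gstar (fst w)) \<partial>P))\<^sup>2 \<partial>P)))"
proof -
  interpret prob_space M by (rule M)
  define MZ where "MZ = MR \<Otimes>\<^sub>M MX \<Otimes>\<^sub>M MY"
  define MD where "MD = PiM UNIV (\<lambda>_::nat. MX \<Otimes>\<^sub>M MY)"
  define Z where "Z = (\<lambda>i \<omega>. (R i \<omega>, X i \<omega>, Y i \<omega>))"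
  define Dv where "Dv = (\<lambda>\<omega> i. (X i \<omega>, Y i \<omega>))"
  have Zm[measurable]: "Z i \<in> measurable M MZ" for i using Z_meas by (simp add: Z_def MZ_def)
  have PZ: "distr M MZ (Z i) = P" for i using Z_law by (simp add: Z_def MZ_def)
  have Pprob: "prob_space P" using PZ[of 0] prob_space_distr[OF Zm[of 0]] by simp
  interpret P: prob_space P by (rule Pprob)
  have setsP: "sets P = sets MZ" using PZ[of 0] by (metis sets_distr)
  have spaceP: "space P = space MZ" using PZ[of 0] by (metis space_distr)
  have ZmP[measurable]: "Z i \<in> measurable M P" for i by (subst measurable_cong_sets[OF refl setsP]) (rule Zm)
  have ZindP: "indep_vars (\<lambda>_. P) Z UNIV"
    using Z_indep[folded Z_def MZ_def] unfolding indep_vars_def2 by (simp add: setsP ZmP)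
  have ZlawP: "distr M P (Z i) = P" for i
  proof (rule measure_eqI)
    show "sets (distr M P (Z i)) = sets P" by simp
    fix A assume "A \<in> sets (distr M P (Z i))"
    then have A: "A \<in> sets P" "A \<in> sets MZ" using setsP by auto
    have "emeasure (distr M P (Z i)) A = emeasure M (Z i -` A \<inter> space M)"
      by (rule emeasure_distr[OF ZmP A(1)])
    also have "\<dots> = emeasure (distr M MZ (Z i)) A"
      by (rule emeasure_distr[OF Zm A(2), symmetric])
    finally show "emeasure (distr M P (Z i)) A = emeasure P A" by (simp add: PZ)
  qed
  have Zm2: "Z i \<in> measurable M (MR \<Otimes>\<^sub>M MX \<Otimes>\<^sub>M MY)" for i using Zm by (simp add: MZ_def)
  have Xm[measurable]: "X i \<in> measurable M MX" for i
  proof -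
    have "(\<lambda>\<omega>. fst (snd (Z i \<omega>))) \<in> measurable M MX" using Zm2[of i] by measurable
    then show ?thesis by (simp add: Z_def)
  qed
  have Ym[measurable]: "Y i \<in> measurable M MY" for i
  proof -
    have "(\<lambda>\<omega>. snd (snd (Z i \<omega>))) \<in> measurable M MY" using Zm2[of i] by measurable
    then show ?thesis by (simp add: Z_def)
  qed
  have Dm[measurable]: "Dv \<in> measurable M MD"
    unfolding MD_def Dv_def by (rule measurable_PiM_UNIV) simp
  have Dspace: "Dv \<omega> \<in> space MD" if "\<omega> \<in> space M" for \<omega>
    using measurable_space[OF Dm that] .
  define xi where "xi = (\<lambda>z::(nat\<Rightarrow>real)\<times>'x\<times>'y. l (snd (snd z)) (gstar (fst z)))"
  have gstarG: "gstar \<in> G" using gstar(1) unfolding Gd_def by auto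
  have gstar_m[measurable]: "gstar \<in> borel_measurable MR" using G_meas gstarG by auto
  have lcomp[measurable]: "(\<lambda>x. l (f x) (g x)) \<in> borel_measurable N"
    if "f \<in> measurable N MY" "g \<in> borel_measurable N" for f :: "_ \<Rightarrow> 'y" and g :: "_ \<Rightarrow> 'yh" and N
    using measurable_compose[OF measurable_Pair[OF that] l_meas] by simp
  have xi_m[measurable]: "xi \<in> borel_measurable MZ" unfolding xi_def MZ_def by measurable
  have xi_mP[measurable]: "xi \<in> borel_measurable P" by (subst measurable_cong_sets[OF setsP refl]) (rule xi_m)
  have xi_int: "integrable P xi" using G_int gstarG by (simp add: xi_def)
  have xi_sq: "integrable P (\<lambda>z. (xi z)\<^sup>2)" using var_fin by (simp add: xi_def)
  define \<mu> where "\<mu> = (\<integral>z. xi z \<partial>P)"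
  define s2 where "s2 = (\<integral>z. (xi z - \<mu>)\<^sup>2 \<partial>P)"
  define \<zeta> where "\<zeta> = (\<lambda>i \<omega>. xi (Z i \<omega>) - \<mu>)"
  have xc_sq: "integrable P (\<lambda>z. (xi z - \<mu>)\<^sup>2)"
    using xi_int xi_sq by (simp add: power2_diff)
  have iid: "iidz M \<zeta> s2 (distr M borel (\<zeta> 0))"
  proof unfold_locales
    show "indep_vars (\<lambda>_. borel) \<zeta> UNIV"
      unfolding \<zeta>_def by (rule indep_vars_compose2[OF ZindP]) simp
    have int_eq: "(\<integral>\<omega>. f (Z i \<omega>) \<partial>M) = (\<integral>z. f z \<partial>P)" if [measurable]: "f \<in> borel_measurable P" for f :: "_ \<Rightarrow> real" and i
      using integral_distr[OF ZmP[of i], of f] ZlawP[of i] by simp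
    have inte_eq: "integrable M (\<lambda>\<omega>. f (Z i \<omega>)) \<longleftrightarrow> integrable P f" if [measurable]: "f \<in> borel_measurable P" for f :: "_ \<Rightarrow> real" and i
      using integrable_distr_eq[OF ZmP[of i], of f] ZlawP[of i] by simp
    show "integrable M (\<lambda>\<omega>. (\<zeta> i \<omega>)\<^sup>2)" for i
      unfolding \<zeta>_def using inte_eq[of "\<lambda>z. (xi z - \<mu>)\<^sup>2" i] xc_sq by simp
    show "expectation (\<zeta> i) = 0" for i
      unfolding \<zeta>_def using int_eq[of "\<lambda>z. xi z - \<mu>" i] xi_int by (simp add: \<mu>_def P.prob_space)
    show "expectation (\<lambda>\<omega>. (\<zeta> i \<omega>)\<^sup>2) = s2" for i
      unfolding \<zeta>_def s2_def using int_eq[of "\<lambda>z. (xi z - \<mu>)\<^sup>2" i] by simp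
    have "distr M borel (\<zeta> i) = distr P borel (\<lambda>z. xi z - \<mu>)" for i
    proof -
      have "distr M borel (\<zeta> i) = distr (distr M P (Z i)) borel (\<lambda>z. xi z - \<mu>)"
        unfolding \<zeta>_def by (subst distr_distr) (auto simp: comp_def)
      then show ?thesis by (simp add: ZlawP)
    qed
    then show "distr M borel (\<zeta> i) = distr M borel (\<zeta> 0)" for i by simp
  qed
  interpret Z: iidz M \<zeta> s2 "distr M borel (\<zeta> 0)" by (rule iid)
  define hh where "hh = (\<lambda>n k d' (D::nat \<Rightarrow> 'x \<times> 'y) (z::(nat\<Rightarrow>real)\<times>'x\<times>'y). l (snd (snd z)) (ghat n k d' D (phihat n k D (fst (snd z)))))"
  define dl where "dl = (\<lambda>n k d' D z. hh n k d' D z - xi z)"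
  define bb where "bb = (\<lambda>n k d' \<omega>. \<integral>z. dl n k d' (Dv \<omega>) z \<partial>P)"
  have HM: "(\<lambda>x. dl n k d' (fst x) (snd x)) \<in> borel_measurable (MD \<Otimes>\<^sub>M MZ)" if "k < K" "d' \<le> dmax" for n k d'
  proof -
    have ph: "(\<lambda>(D, x). phihat n k D x) \<in> measurable (MD \<Otimes>\<^sub>M MX) MR" using phihat_meas that by (simp add: MD_def)
    have gh: "(\<lambda>(D, r). ghat n k d' D r) \<in> borel_measurable (MD \<Otimes>\<^sub>M MR)" using ghat_meas that by (simp add: MD_def)
    have "(\<lambda>x. (fst x, fst (snd (snd x)))) \<in> measurable (MD \<Otimes>\<^sub>M MZ) (MD \<Otimes>\<^sub>M MX)" unfolding MZ_def by measurable
    from measurable_compose[OF this ph]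
    have ph2: "(\<lambda>x. phihat n k (fst x) (fst (snd (snd x)))) \<in> measurable (MD \<Otimes>\<^sub>M MZ) MR" by simp
    have "(\<lambda>x. (fst x, phihat n k (fst x) (fst (snd (snd x))))) \<in> measurable (MD \<Otimes>\<^sub>M MZ) (MD \<Otimes>\<^sub>M MR)"
      by (rule measurable_Pair[OF measurable_fst ph2])
    from measurable_compose[OF this gh]
    have gh2: "(\<lambda>x. ghat n k d' (fst x) (phihat n k (fst x) (fst (snd (snd x))))) \<in> borel_measurable (MD \<Otimes>\<^sub>M MZ)" by simp
    have y: "(\<lambda>x. snd (snd (snd x))) \<in> measurable (MD \<Otimes>\<^sub>M MZ) MY" unfolding MZ_def by measurable
    have "(\<lambda>x. hh n k d' (fst x) (snd x)) \<in> borel_measurable (MD \<Otimes>\<^sub>M MZ)"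
      unfolding hh_def using lcomp[OF y gh2] by simp
    moreover have "(\<lambda>x. xi (snd x)) \<in> borel_measurable (MD \<Otimes>\<^sub>M MZ)" by measurable
    ultimately show ?thesis unfolding dl_def by simp
  qed
  have HMP: "(\<lambda>x. dl n k d' (f x) (g x)) \<in> borel_measurable N"
    if "k < K" "d' \<le> dmax" "f \<in> measurable N MD" "g \<in> measurable N P" for n k d' f g N
  proof -
    have g': "g \<in> measurable N MZ" using that(4) measurable_cong_sets[OF refl setsP, of N] by simp
    show ?thesis using measurable_compose[OF measurable_Pair[OF that(3) g'] HM[OF that(1,2)]] by simp
  qed
  have bbm[measurable]: "bb n k d' \<in> borel_measurable M" if "k < K" "d' \<le> dmax" for n k d'
  proof -
    have "(\<lambda>x. dl n k d' (Dv (fst x)) (snd x)) \<in> borel_measurable (M \<Otimes>\<^sub>M P)"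
      by (rule HMP[OF that]) measurable
    then show ?thesis unfolding bb_def
      by (intro P.borel_measurable_lebesgue_integral) (simp add: case_prod_beta')
  qed
  have Ksub: "I n k \<subseteq> {..<n}" if "k < K" for n k using folds_cover that by blast
  have finI: "finite (I n k)" if "k < K" for n k by (rule finite_subset[OF Ksub[OF that]]) simp
  have subs: "Ia n k \<subseteq> I n k" "Ib n k \<subseteq> I n k" "Io n k \<subseteq> I n k" if "k < K" for n k
    using split_cover that by blast+
  have fins: "finite (Ia n k)" "finite (Ib n k)" "finite (Io n k)" if "k < K" for n k
    by (rule finite_subset[OF subs(1)[OF that] finI[OF that]], rule finite_subset[OF subs(2)[OF that] finI[OF that]],
        rule finite_subset[OF subs(3)[OF that] finI[OF that]])
  have cardI: "card (I n k) = 2 * card (Ia n k) + card (Io n k)" if "k < K" for n k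
  proof -
    have "card (I n k) = card (Ia n k \<union> Ib n k \<union> Io n k)" using split_cover that by simp
    also have "\<dots> = card (Ia n k) + card (Ib n k) + card (Io n k)"
      using split_disj that fins[OF that] by (simp add: card_Un_disjoint Int_Un_distrib2)
    finally show ?thesis using split_ab that by simp
  qed
  have K0: "K > 0" using K by simp
  define \<alpha> where "\<alpha> = (1 - tau) / (K * (2 - tau))"
  define \<beta> where "\<beta> = tau / (K * (2 - tau))"
  have \<alpha>: "\<alpha> > 0" unfolding \<alpha>_def using tau K0 by simp
  have lim_ao: "(\<lambda>n. real (card (Ia n k)) / real n) \<longlonglongrightarrow> \<alpha> \<and> (\<lambda>n. real (card (Io n k)) / real n) \<longlonglongrightarrow> \<beta>"
    if "k < K" for k
  proof -
    have m: "(\<lambda>n. real (card (I n k)) / real n) \<longlonglongrightarrow> 1 / K" using folds_size that by blast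
    have o: "(\<lambda>n. real (card (Io n k)) / real (card (Ia n k) + card (Io n k))) \<longlonglongrightarrow> tau" using split_o that by blast
    show ?thesis using card_asym[OF K0 m o tau(1) tau(2) cardI[OF that]] by (simp add: \<alpha>_def \<beta>_def)
  qed
  have lima: "(\<lambda>n. real (card (Ia n k)) / real n) \<longlonglongrightarrow> \<alpha>" if "k < K" for k using lim_ao[OF that] by blast
  have limo: "(\<lambda>n. real (card (Io n k)) / real n) \<longlonglongrightarrow> \<beta>" if "k < K" for k using lim_ao[OF that] by blast
  obtain \<omega>0 where \<omega>0: "\<omega>0 \<in> space M" using not_empty by blast
  define c0 where "c0 = (X 0 \<omega>0, Y 0 \<omega>0)"
  have c0: "c0 \<in> space (MX \<Otimes>\<^sub>M MY)"
    using \<omega>0 measurable_space[OF Xm] measurable_space[OF Ym] by (auto simp: c0_def space_pair_measure)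
  define cn where "cn = (\<lambda>n::nat. sqrt (real n / (2 - tau)) * (1 / real K))"
  have cn_sq: "(cn n)\<^sup>2 = real n / ((2 - tau) * (real K)\<^sup>2)" for n
    using tau by (simp add: cn_def power_mult_distrib power_divide)
  have snd_m: "(\<lambda>z. snd z) \<in> measurable P (MX \<Otimes>\<^sub>M MY)"
    by (subst measurable_cong_sets[OF setsP refl]) (simp add: MZ_def)
  have FL: "oP M (\<lambda>n \<omega>. (cn n * w) * ((\<Sum>i\<in>JJ n. dl n k d' (Dv \<omega>) (Z i \<omega>) - bb n k d' \<omega>) / card (JJ n)))"
    if k: "k < K" and d': "dstar P l G dmax \<le> d'" "d' \<le> dmax" and JJ: "\<And>n. JJ n \<subseteq> I n k"
      and B: "B > 0" and size: "eventually (\<lambda>n. real n \<le> B * real (card (JJ n))) sequentially"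
    for k d' JJ w B
  proof -
    define dec where "dec = (\<lambda>n (v::nat \<Rightarrow> (nat\<Rightarrow>real)\<times>'x\<times>'y) i. if i \<in> JJ n then c0 else snd (v i))"
    define F where "F = (\<lambda>n v z. dl n k d' (dec n v) z)"
    have finJ: "finite (JJ n)" for n by (rule finite_subset[OF JJ finI[OF k]])
    have decm: "dec n \<in> measurable (PiM (UNIV - JJ n) (\<lambda>_. P)) MD" for n
      unfolding MD_def dec_def
    proof (rule measurable_PiM_UNIV)
      fix i
      show "(\<lambda>v. if i \<in> JJ n then c0 else snd (v i)) \<in> measurable (PiM (UNIV - JJ n) (\<lambda>_. P)) (MX \<Otimes>\<^sub>M MY)"
      proof (cases "i \<in> JJ n")
        case True then show ?thesis using c0 by simp
      next
        case False
        have "(\<lambda>v. v i) \<in> measurable (PiM (UNIV - JJ n) (\<lambda>_. P)) P"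
          using False by (intro measurable_component_singleton) auto
        from measurable_compose[OF this snd_m] show ?thesis using False by simp
      qed
    qed
    have Fm: "(\<lambda>(v,z). F n v z) \<in> borel_measurable (PiM (UNIV - JJ n) (\<lambda>_. P) \<Otimes>\<^sub>M P)" for n
    proof -
      have "(\<lambda>x. dl n k d' (dec n (fst x)) (snd x)) \<in> borel_measurable (PiM (UNIV - JJ n) (\<lambda>_. P) \<Otimes>\<^sub>M P)"
        by (rule HMP[OF k d'(2)]) (use decm in measurable)
      then show ?thesis by (simp add: F_def case_prod_beta')
    qed
    have Feq: "F n (restrict (\<lambda>i. Z i \<omega>) (UNIV - JJ n)) = dl n k d' (Dv \<omega>)" for n \<omega>
    proof -
      have agree: "\<And>i. i \<in> {..<n} - I n k \<Longrightarrow> dec n (restrict (\<lambda>i. Z i \<omega>) (UNIV - JJ n)) i = Dv \<omega> i"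
        using JJ by (auto simp: dec_def Dv_def Z_def)
      from train_only[rule_format, OF k agree]
      have "phihat n k (dec n (restrict (\<lambda>i. Z i \<omega>) (UNIV - JJ n))) = phihat n k (Dv \<omega>)"
        "ghat n k d' (dec n (restrict (\<lambda>i. Z i \<omega>) (UNIV - JJ n))) = ghat n k d' (Dv \<omega>)" by auto
      then show ?thesis by (simp add: F_def dl_def hh_def)
    qed
    have A: "w\<^sup>2 / ((2 - tau) * (real K)\<^sup>2) \<ge> 0" using tau by simp
    have cA: "(cn n * w)\<^sup>2 \<le> w\<^sup>2 / ((2 - tau) * (real K)\<^sup>2) * real n" for n
      by (simp add: power_mult_distrib cn_sq mult.commute)
    have q: "(\<lambda>n. measure M {\<omega>\<in>space M. ennreal \<delta> <
         (\<integral>\<^sup>+z. ennreal ((F n (restrict (\<lambda>i. Z i \<omega>) (UNIV - JJ n)) z)\<^sup>2) \<partial>P)}) \<longlonglongrightarrow> 0" if "\<delta> > 0" for \<delta>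
    proof -
      have "small_oP1_enn M (\<lambda>n \<omega>. \<integral>\<^sup>+ z. ennreal
                  ((l (snd (snd z)) (ghat n k d' (\<lambda>i. (X i \<omega>, Y i \<omega>))
                        (phihat n k (\<lambda>i. (X i \<omega>, Y i \<omega>)) (fst (snd z))))
                    - l (snd (snd z)) (gstar (fst z)))\<^sup>2) \<partial>P)"
        using C3 d' k by blast
      then show ?thesis using that unfolding small_oP1_enn_def
        by (simp add: Feq dl_def hh_def xi_def Dv_def)
    qed
    have "oP M (\<lambda>n \<omega>. (cn n * w) * ((\<Sum>i\<in>JJ n. F n (restrict (\<lambda>i. Z i \<omega>) (UNIV - JJ n)) (Z i \<omega>)
             - (\<integral>z. F n (restrict (\<lambda>i. Z i \<omega>) (UNIV - JJ n)) z \<partial>P)) / card (JJ n)))"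
      by (rule fluct_oP[OF Pprob ZindP ZlawP finJ Fm A cA B size q])
    then show ?thesis by (rule oP_cong) (simp add: Feq bb_def)
  qed
  have BI: "oP M (\<lambda>n \<omega>. sqrt n * bb n k d' \<omega>)"
    if k: "k < K" and d': "dstar P l G dmax \<le> d'" "d' \<le> dmax" for k d'
  proof -
    have "\<exists>C>0. \<forall>phs gs.
               (\<forall>j. phs j \<in> measurable MX MR \<and> gs j \<in> Gd G d') \<and>
               (\<lambda>j. nrm (\<lambda>z. gs j (phs j (fst (snd z))) - gstar (fst z))) \<longlonglongrightarrow> 0 \<longrightarrow>
               (\<forall>\<^sub>F j in sequentially.
                  \<bar>\<integral>z. l (snd (snd z)) (gs j (phs j (fst (snd z)))) - l (snd (snd z)) (gstar (fst z)) \<partial>P\<bar>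
                  \<le> C * (nrm (\<lambda>z. gs j (phs j (fst (snd z))) - gstar (fst z)))\<^sup>2)"
      using C1 d' by blast
    then obtain C where C: "C > 0" and HC: "\<forall>phs gs.
               (\<forall>j. phs j \<in> measurable MX MR \<and> gs j \<in> Gd G d') \<and>
               (\<lambda>j. nrm (\<lambda>z. gs j (phs j (fst (snd z))) - gstar (fst z))) \<longlonglongrightarrow> 0 \<longrightarrow>
               (\<forall>\<^sub>F j in sequentially.
                  \<bar>\<integral>z. l (snd (snd z)) (gs j (phs j (fst (snd z)))) - l (snd (snd z)) (gstar (fst z)) \<partial>P\<bar>
                  \<le> C * (nrm (\<lambda>z. gs j (phs j (fst (snd z))) - gstar (fst z)))\<^sup>2)" by blast
    have "\<exists>\<eta>>0. \<forall>ph g. (ph \<in> measurable MX MR \<and> g \<in> Gd G d') \<and> \<bar>nrm (\<lambda>z. g (ph (fst (snd z))) - gstar (fst z))\<bar> < \<eta> \<longrightarrow>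
        \<bar>\<integral>z. l (snd (snd z)) (g (ph (fst (snd z)))) - l (snd (snd z)) (gstar (fst z)) \<partial>P\<bar>
          \<le> C * (nrm (\<lambda>z. g (ph (fst (snd z))) - gstar (fst z)))\<^sup>2"
      using unif_from_seq[where Q="\<lambda>ph g. ph \<in> measurable MX MR \<and> g \<in> Gd G d'"
          and N="\<lambda>ph g. nrm (\<lambda>z. g (ph (fst (snd z))) - gstar (fst z))"
          and I="\<lambda>ph g. \<integral>z. l (snd (snd z)) (g (ph (fst (snd z)))) - l (snd (snd z)) (gstar (fst z)) \<partial>P"
          and C=C] HC by blast
    then obtain \<eta> where \<eta>: "\<eta> > 0" and H\<eta>: "\<And>ph g. ph \<in> measurable MX MR \<Longrightarrow> g \<in> Gd G d' \<Longrightarrow>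
        \<bar>nrm (\<lambda>z. g (ph (fst (snd z))) - gstar (fst z))\<bar> < \<eta> \<Longrightarrow>
        \<bar>\<integral>z. l (snd (snd z)) (g (ph (fst (snd z)))) - l (snd (snd z)) (gstar (fst z)) \<partial>P\<bar>
          \<le> C * (nrm (\<lambda>z. g (ph (fst (snd z))) - gstar (fst z)))\<^sup>2" by blast
    have nr: "small_oP M (\<lambda>n \<omega>. nrm (\<lambda>z. ghat n k d' (Dv \<omega>) (phihat n k (Dv \<omega>) (fst (snd z))) - gstar (fst z)))
                          (\<lambda>n. real n powr (-1/4))"
      using C2 d' k unfolding Dv_def by blast
    show ?thesis
    proof (rule bias_oP[OF nr _ C \<eta>])
      show "bb n k d' \<in> borel_measurable M" for n using bbm k d' by simp
      fix n \<omega> assume \<omega>: "\<omega> \<in> space M"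
        and small: "\<bar>nrm (\<lambda>z. ghat n k d' (Dv \<omega>) (phihat n k (Dv \<omega>) (fst (snd z))) - gstar (fst z))\<bar> < \<eta>"
      have phm: "phihat n k (Dv \<omega>) \<in> measurable MX MR"
        using measurable_Pair2[OF phihat_meas[rule_format, OF k] Dspace[OF \<omega>, unfolded MD_def]] by simp
      have gin: "ghat n k d' (Dv \<omega>) \<in> Gd G d'" using ghat_in k d' by blast
      show "\<bar>bb n k d' \<omega>\<bar> \<le> C * (nrm (\<lambda>z. ghat n k d' (Dv \<omega>) (phihat n k (Dv \<omega>) (fst (snd z))) - gstar (fst z)))\<^sup>2"
        using H\<eta>[OF phm gin small] by (simp add: bb_def dl_def hh_def xi_def)
    qed
  qed
  define stat where "stat = (\<lambda>n \<omega>.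
              sqrt (real n / (2 - tau)) *
              ((1 / real K) * (\<Sum>k<K.
                 let D = (\<lambda>i. (X i \<omega>, Y i \<omega>)); ph = phihat n k D;
                     gd = ghat n k d D; gm = ghat n k dmax D
                 in (tau * emp_loss l ph gd D (Io n k) + (1 - tau) * emp_loss l ph gd D (Ia n k))
                    - (tau * emp_loss l ph gm D (Io n k) + (1 - tau) * emp_loss l ph gm D (Ib n k)))))"
  define FLt where "FLt = (\<lambda>d' (JJ :: nat \<Rightarrow> nat \<Rightarrow> nat set) k n \<omega>.
      (\<Sum>i\<in>JJ n k. dl n k d' (Dv \<omega>) (Z i \<omega>) - bb n k d' \<omega>) / real (card (JJ n k)))"
  define Main where "Main = (\<lambda>n \<omega>. cn n * (\<Sum>k<K. (1 - tau) * (((\<Sum>i\<in>Ia n k. \<zeta> i \<omega>) - (\<Sum>i\<in>Ib n k. \<zeta> i \<omega>)) / real (card (Ia n k)))))"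
  define Rk where "Rk = (\<lambda>k n \<omega>.
      (cn n * tau) * FLt d Io k n \<omega> + (cn n * (- tau)) * FLt dmax Io k n \<omega>
      + (cn n * (1 - tau)) * FLt d Ia k n \<omega> + (cn n * (- (1 - tau))) * FLt dmax Ib k n \<omega>
      + cn n * (if Io n k = {} then 0 else tau * (bb n k d \<omega> - bb n k dmax \<omega>))
      + cn n * (if Ia n k = {} then 0 else (1 - tau) * (bb n k d \<omega> - bb n k dmax \<omega>)))"
  define Rem where "Rem = (\<lambda>n \<omega>. \<Sum>k<K. Rk k n \<omega>)"
  have emp_eq: "emp_loss l (phihat n k (Dv \<omega>)) (ghat n k d' (Dv \<omega>)) (Dv \<omega>) J
      = (\<Sum>i\<in>J. \<mu> + \<zeta> i \<omega> + dl n k d' (Dv \<omega>) (Z i \<omega>)) / real (card J)" for n k d' \<omega> J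
    unfolding emp_loss_def by (simp add: \<zeta>_def dl_def hh_def xi_def Dv_def Z_def)
  have stat_eq: "stat n \<omega> = Main n \<omega> + Rem n \<omega>" for n \<omega>
  proof -
    have br: "(let D = (\<lambda>i. (X i \<omega>, Y i \<omega>)); ph = phihat n k D;
                     gd = ghat n k d D; gm = ghat n k dmax D
                 in (tau * emp_loss l ph gd D (Io n k) + (1 - tau) * emp_loss l ph gd D (Ia n k))
                    - (tau * emp_loss l ph gm D (Io n k) + (1 - tau) * emp_loss l ph gm D (Ib n k)))
        = (1 - tau) * (((\<Sum>i\<in>Ia n k. \<zeta> i \<omega>) - (\<Sum>i\<in>Ib n k. \<zeta> i \<omega>)) / real (card (Ia n k)))
          + (tau * FLt d Io k n \<omega> - tau * FLt dmax Io k n \<omega>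
             + (1 - tau) * FLt d Ia k n \<omega> - (1 - tau) * FLt dmax Ib k n \<omega>
             + (if Io n k = {} then 0 else tau * (bb n k d \<omega> - bb n k dmax \<omega>))
             + (if Ia n k = {} then 0 else (1 - tau) * (bb n k d \<omega> - bb n k dmax \<omega>)))"
      if k: "k \<in> {..<K}" for k
    proof -
      have k': "k < K" using k by simp
      have "(let D = (\<lambda>i. (X i \<omega>, Y i \<omega>)); ph = phihat n k D;
                     gd = ghat n k d D; gm = ghat n k dmax D
                 in (tau * emp_loss l ph gd D (Io n k) + (1 - tau) * emp_loss l ph gd D (Ia n k))
                    - (tau * emp_loss l ph gm D (Io n k) + (1 - tau) * emp_loss l ph gm D (Ib n k)))
          = (tau * ((\<Sum>i\<in>Io n k. \<mu> + \<zeta> i \<omega> + dl n k d (Dv \<omega>) (Z i \<omega>)) / card (Io n k))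
              + (1-tau) * ((\<Sum>i\<in>Ia n k. \<mu> + \<zeta> i \<omega> + dl n k d (Dv \<omega>) (Z i \<omega>)) / card (Ia n k)))
           - (tau * ((\<Sum>i\<in>Io n k. \<mu> + \<zeta> i \<omega> + dl n k dmax (Dv \<omega>) (Z i \<omega>)) / card (Io n k))
              + (1-tau) * ((\<Sum>i\<in>Ib n k. \<mu> + \<zeta> i \<omega> + dl n k dmax (Dv \<omega>) (Z i \<omega>)) / card (Ib n k)))"
        unfolding Let_def Dv_def using emp_eq[unfolded Dv_def] by presburger
      also have "\<dots> = (1 - tau) * (((\<Sum>i\<in>Ia n k. \<zeta> i \<omega>) - (\<Sum>i\<in>Ib n k. \<zeta> i \<omega>)) / real (card (Ia n k)))
          + (tau * FLt d Io k n \<omega> - tau * FLt dmax Io k n \<omega>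
             + (1 - tau) * FLt d Ia k n \<omega> - (1 - tau) * FLt dmax Ib k n \<omega>
             + (if Io n k = {} then 0 else tau * (bb n k d \<omega> - bb n k dmax \<omega>))
             + (if Ia n k = {} then 0 else (1 - tau) * (bb n k d \<omega> - bb n k dmax \<omega>)))"
        unfolding FLt_def
        by (rule fold_identity[OF fins(3)[OF k'] fins(1)[OF k'] fins(2)[OF k'] split_ab[rule_format, OF k']])
      finally show ?thesis .
    qed
    define Ak where "Ak = (\<lambda>k. (1 - tau) * (((\<Sum>i\<in>Ia n k. \<zeta> i \<omega>) - (\<Sum>i\<in>Ib n k. \<zeta> i \<omega>)) / real (card (Ia n k))))"
    define Bk where "Bk = (\<lambda>k. tau * FLt d Io k n \<omega> - tau * FLt dmax Io k n \<omega>
             + (1 - tau) * FLt d Ia k n \<omega> - (1 - tau) * FLt dmax Ib k n \<omega>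
             + (if Io n k = {} then 0 else tau * (bb n k d \<omega> - bb n k dmax \<omega>))
             + (if Ia n k = {} then 0 else (1 - tau) * (bb n k d \<omega> - bb n k dmax \<omega>)))"
    have "stat n \<omega> = cn n * (\<Sum>k<K. Ak k + Bk k)"
      unfolding stat_def cn_def Ak_def Bk_def using br by (simp add: mult.assoc)
    also have "\<dots> = cn n * (\<Sum>k<K. Ak k) + (\<Sum>k<K. cn n * Bk k)"
      by (simp add: sum.distrib distrib_left sum_distrib_left)
    also have "cn n * (\<Sum>k<K. Ak k) = Main n \<omega>" unfolding Main_def Ak_def ..
    also have "(\<Sum>k<K. cn n * Bk k) = Rem n \<omega>"
      unfolding Rem_def Rk_def Bk_def by (intro sum.cong refl) (simp add: algebra_simps)
    finally show ?thesis .
  qed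
  have fmM: "finite_measure M" using M unfolding prob_space_def by simp
  have dstar_dmax: "dstar P l G dmax \<le> dmax" using d by simp
  have \<beta>pos: "\<beta> > 0" if "tau \<noteq> 0" unfolding \<beta>_def using tau K0 that by simp
  have cn_eq: "cn n = sqrt n / (sqrt (2 - tau) * real K)" for n
    unfolding cn_def by (simp add: real_sqrt_divide)
  have BIAS: "oP M (\<lambda>n \<omega>. cn n * (t * (bb n k d \<omega> - bb n k dmax \<omega>)))" if k: "k < K" for k t
  proof -
    have "oP M (\<lambda>n \<omega>. sqrt n * bb n k d \<omega> + (-1) * (sqrt n * bb n k dmax \<omega>))"
      by (rule oP_add[OF fmM BI[OF k d] oP_cmult[OF BI[OF k dstar_dmax order_refl]]])
    from oP_cmult[OF this, of "t / (sqrt (2 - tau) * real K)"]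
    show ?thesis by (rule oP_cong) (simp add: cn_eq field_simps)
  qed
  have Rk_oP: "oP M (Rk k)" if k: "k < K" for k
  proof -
    have szo: "eventually (\<lambda>n. real n \<le> (2 / \<beta>) * real (card (Io n k))) sequentially" if "tau \<noteq> 0"
      by (rule ratio_bound[OF limo[OF k] \<beta>pos[OF that]])
    have sza: "eventually (\<lambda>n. real n \<le> (2 / \<alpha>) * real (card (Ia n k))) sequentially"
      by (rule ratio_bound[OF lima[OF k] \<alpha>])
    have szb: "eventually (\<lambda>n. real n \<le> (2 / \<alpha>) * real (card (Ib n k))) sequentially"
      using sza split_ab k by simp
    have T1: "oP M (\<lambda>n \<omega>. (cn n * tau) * FLt d Io k n \<omega>)"
    proof (cases "tau = 0")
      case True show ?thesis by (rule oP_cong[OF oP_zero]) (simp add: True)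
    next
      case False
      show ?thesis unfolding FLt_def
        by (rule FL[OF k d(1) d(2) _ _ szo[OF False]]) (use subs[OF k] \<beta>pos[OF False] in auto)
    qed
    have T2: "oP M (\<lambda>n \<omega>. (cn n * (- tau)) * FLt dmax Io k n \<omega>)"
    proof (cases "tau = 0")
      case True show ?thesis by (rule oP_cong[OF oP_zero]) (simp add: True)
    next
      case False
      show ?thesis unfolding FLt_def
        by (rule FL[OF k dstar_dmax order_refl _ _ szo[OF False]]) (use subs[OF k] \<beta>pos[OF False] in auto)
    qed
    have T3: "oP M (\<lambda>n \<omega>. (cn n * (1 - tau)) * FLt d Ia k n \<omega>)"
      unfolding FLt_def
      by (rule FL[OF k d(1) d(2) _ _ sza]) (use subs[OF k] \<alpha> in auto)
    have T4: "oP M (\<lambda>n \<omega>. (cn n * (- (1 - tau))) * FLt dmax Ib k n \<omega>)"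
      unfolding FLt_def
      by (rule FL[OF k dstar_dmax order_refl _ _ szb]) (use subs[OF k] \<alpha> in auto)
    have T5: "oP M (\<lambda>n \<omega>. cn n * (if Io n k = {} then 0 else tau * (bb n k d \<omega> - bb n k dmax \<omega>)))"
      by (rule oP_dom[OF BIAS[OF k, of tau]]) (use k d bbm in \<open>auto simp: abs_mult\<close>)
    have T6: "oP M (\<lambda>n \<omega>. cn n * (if Ia n k = {} then 0 else (1 - tau) * (bb n k d \<omega> - bb n k dmax \<omega>)))"
      by (rule oP_dom[OF BIAS[OF k, of "1 - tau"]]) (use k d bbm in \<open>auto simp: abs_mult\<close>)
    show ?thesis unfolding Rk_def
      by (intro oP_add[OF fmM] T1 T2 T3 T4 T5 T6)
  qed
  have Rem_oP: "oP M Rem"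
    unfolding Rem_def using oP_sum[OF fmM, of "{..<K}" Rk] Rk_oP by simp
  define S where "S = (\<lambda>n k. Ia n k \<union> Ib n k)"
  have Sfin: "finite (S n k)" if "k < K" for n k using fins[OF that] by (simp add: S_def)
  have Idisj: "I n k \<inter> I n k' = {}" if "k < K" "k' < K" "k \<noteq> k'" for n k k'
    using folds_disj that unfolding disjoint_family_on_def by blast
  have Sdisj: "disjoint_family_on (S n) {..<K}" for n
    unfolding disjoint_family_on_def
  proof (intro ballI impI)
    fix k k' assume "k \<in> {..<K}" "k' \<in> {..<K}" "k \<noteq> k'"
    then have "k < K" "k' < K" "k \<noteq> k'" by auto
    then show "S n k \<inter> S n k' = {}"
      using Idisj[of k k' n] subs[of k n] subs[of k' n] unfolding S_def by blast
  qed
  define gm where "gm = (\<lambda>n k i. cn n * (1 - tau) / real (card (Ia n k)) * Z.sgn_set (Ia n k) i)"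
  have IaIb: "Ia n k \<inter> Ib n k = {}" if "k < K" for n k using split_disj that by blast
  have Main_eq: "Main n \<omega> = (\<Sum>k<K. \<Sum>i\<in>S n k. gm n k i * \<zeta> i \<omega>)" for n \<omega>
  proof -
    have "cn n * ((1 - tau) * (((\<Sum>i\<in>Ia n k. \<zeta> i \<omega>) - (\<Sum>i\<in>Ib n k. \<zeta> i \<omega>)) / real (card (Ia n k))))
        = (\<Sum>i\<in>S n k. gm n k i * \<zeta> i \<omega>)" if k: "k \<in> {..<K}" for k
    proof -
      have k': "k < K" using k by simp
      show ?thesis
        unfolding Z.pm_sum[OF fins(1)[OF k'] fins(2)[OF k'] IaIb[OF k'], of "\<lambda>i. \<zeta> i \<omega>"] S_def gm_def
        by (simp add: sum_distrib_left sum_divide_distrib ac_simps)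
    qed
    then show ?thesis unfolding Main_def by (simp add: sum_distrib_left)
  qed
  have Main_sq: "integrable M (\<lambda>\<omega>. (Main n \<omega>)\<^sup>2)"
    "expectation (\<lambda>\<omega>. (Main n \<omega>)\<^sup>2) = (\<Sum>k<K. \<Sum>i\<in>S n k. (gm n k i)\<^sup>2) * s2" for n
    unfolding Main_eq
    by (rule Z.sq_family(1)[OF _ _ Sdisj[of n]], auto intro: Sfin)
       (rule Z.sq_family(2)[OF _ _ Sdisj[of n]], auto intro: Sfin)
  have Main_m[measurable]: "Main n \<in> borel_measurable M" for n unfolding Main_def by measurable
  have Rem_m[measurable]: "Rem n \<in> borel_measurable M" for n using oP_meas[OF Rem_oP] .
  have stat_fun: "stat n = (\<lambda>\<omega>. Main n \<omega> + Rem n \<omega>)" for n using stat_eq by auto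
  have "weak_conv_m (\<lambda>n. distr M borel (stat n)) (gauss0 (2 * (1 - tau) * s2))"
  proof (cases "s2 = 0")
    case True
    have "oP M Main"
    proof (rule oP_L2[OF M Main_m])
      show "integrable M (\<lambda>x. (Main n x)\<^sup>2)" for n by (rule Main_sq(1))
      show "(\<lambda>n. expectation (\<lambda>x. (Main n x)\<^sup>2)) \<longlonglongrightarrow> 0" by (simp add: Main_sq(2) True)
    qed
    then have Boo: "oP M (\<lambda>n \<omega>. Main n \<omega> + Rem n \<omega>)" by (rule oP_add[OF fmM _ Rem_oP])
    have g0: "gauss0 0 = return borel 0" by (simp add: gauss0_def)
    have wc0: "weak_conv_m (\<lambda>n. distr M borel (\<lambda>\<omega>. 0)) (gauss0 0)"
      unfolding g0 weak_conv_m_def weak_conv_def by simp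
    have "weak_conv_m (\<lambda>n. distr M borel (\<lambda>\<omega>. 0 + (Main n \<omega> + Rem n \<omega>))) (gauss0 0)"
      by (rule slutsky[OF _ wc0 real_distribution_gauss0 Boo]) simp
    then show ?thesis using True by (simp add: stat_fun)
  next
    case False
    have s2pos: "s2 > 0" using False Z.s2_nonneg by simp
    define AU where "AU = (\<lambda>n. \<Union>k<K. Ia n k)"
    define BU where "BU = (\<lambda>n. \<Union>k<K. Ib n k)"
    define NN where "NN = (\<lambda>n. card (AU n))"
    have djIa: "Ia n k \<inter> Ia n k' = {}" "Ib n k \<inter> Ib n k' = {}" "Ia n k \<inter> Ib n k' = {}"
      if "k < K" "k' < K" "k \<noteq> k'" for n k k'
      using Idisj[OF that, of n] subs[OF that(1), of n] subs[OF that(2), of n] by blast+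
    have AUfin: "finite (AU n)" for n unfolding AU_def using fins(1) by auto
    have BUfin: "finite (BU n)" for n unfolding BU_def using fins(2) by auto
    have ABdisj: "AU n \<inter> BU n = {}" for n
    proof -
      have "Ia n k \<inter> Ib n k' = {}" if "k < K" "k' < K" for k k'
        using djIa(3)[OF that] IaIb[OF that(1)] by (cases "k = k'") auto
      then show ?thesis unfolding AU_def BU_def by blast
    qed
    have cardA: "card (AU n) = (\<Sum>k<K. card (Ia n k))" for n
      unfolding AU_def by (rule card_UN_disjoint) (use fins(1) djIa(1) in auto)
    have cardB: "card (BU n) = (\<Sum>k<K. card (Ib n k))" for n
      unfolding BU_def by (rule card_UN_disjoint) (use fins(2) djIa(2) in auto)
    have cardBN: "card (BU n) = NN n" for n
      unfolding NN_def cardA cardB using split_ab by (intro sum.cong) auto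
    have NNge: "card (Ia n 0) \<le> NN n" for n
      unfolding NN_def AU_def using K0 fins(1) by (intro card_mono) auto
    have NNlim: "filterlim NN at_top sequentially"
      unfolding filterlim_at_top
    proof
      fix Zc :: nat
      have ev: "eventually (\<lambda>n. real n \<le> (2 / \<alpha>) * real (card (Ia n 0))) sequentially"
        by (rule ratio_bound[OF lima[OF K0] \<alpha>])
      from ev eventually_ge_at_top[of "nat \<lceil>2 * real Zc / \<alpha>\<rceil>"]
      show "eventually (\<lambda>n. Zc \<le> NN n) sequentially"
      proof eventually_elim
        case (elim n)
        have "2 * real Zc / \<alpha> \<le> real n" using elim(2) by linarith
        also have "\<dots> \<le> (2 / \<alpha>) * real (card (Ia n 0))" by (rule elim(1))
        finally have "real Zc \<le> real (card (Ia n 0))" using \<alpha> by (simp add: field_simps)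
        then show ?case using NNge[of n] by linarith
      qed
    qed
    define v where "v = 2 * (1 - tau) * s2"
    have vpos: "v > 0" unfolding v_def using s2pos tau by simp
    define rr where "rr = (\<lambda>n. sqrt v / sqrt (2 * s2 * NN n))"
    define CL where "CL = (\<lambda>n \<omega>. ((\<Sum>i\<in>AU n. \<zeta> i \<omega>) - (\<Sum>i\<in>BU n. \<zeta> i \<omega>)) * rr n)"
    have CLT: "weak_conv_m (\<lambda>n. distr M borel (CL n)) (gauss0 v)"
      unfolding CL_def rr_def
      by (rule Z.clt_pm[OF s2pos vpos AUfin BUfin ABdisj _ cardBN NNlim]) (simp add: NN_def)
    have CL_eq: "CL n \<omega> = (\<Sum>k<K. \<Sum>i\<in>S n k. (rr n * Z.sgn_set (Ia n k) i) * \<zeta> i \<omega>)" for n \<omega>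
    proof -
      have sA: "(\<Sum>i\<in>AU n. \<zeta> i \<omega>) = (\<Sum>k<K. \<Sum>i\<in>Ia n k. \<zeta> i \<omega>)"
        unfolding AU_def by (rule sum.UNION_disjoint) (use fins(1) djIa(1) in auto)
      have sB: "(\<Sum>i\<in>BU n. \<zeta> i \<omega>) = (\<Sum>k<K. \<Sum>i\<in>Ib n k. \<zeta> i \<omega>)"
        unfolding BU_def by (rule sum.UNION_disjoint) (use fins(2) djIa(2) in auto)
      have "CL n \<omega> = (\<Sum>k<K. ((\<Sum>i\<in>Ia n k. \<zeta> i \<omega>) - (\<Sum>i\<in>Ib n k. \<zeta> i \<omega>)) * rr n)"
        unfolding CL_def sA sB sum_subtractf[symmetric] sum_distrib_right ..
      also have "\<dots> = (\<Sum>k<K. \<Sum>i\<in>S n k. (rr n * Z.sgn_set (Ia n k) i) * \<zeta> i \<omega>)"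
      proof (rule sum.cong[OF refl])
        fix k assume "k \<in> {..<K}" then have k: "k < K" by simp
        show "((\<Sum>i\<in>Ia n k. \<zeta> i \<omega>) - (\<Sum>i\<in>Ib n k. \<zeta> i \<omega>)) * rr n = (\<Sum>i\<in>S n k. (rr n * Z.sgn_set (Ia n k) i) * \<zeta> i \<omega>)"
          unfolding Z.pm_sum[OF fins(1)[OF k] fins(2)[OF k] IaIb[OF k], of "\<lambda>i. \<zeta> i \<omega>"] S_def
          by (simp add: sum_distrib_right sum_distrib_left ac_simps)
      qed
      finally show ?thesis .
    qed
    define corr where "corr = (\<lambda>n \<omega>. \<Sum>k<K. \<Sum>i\<in>S n k. (gm n k i - rr n * Z.sgn_set (Ia n k) i) * \<zeta> i \<omega>)"
    have corr_eq: "Main n \<omega> = CL n \<omega> + corr n \<omega>" for n \<omega>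
      unfolding Main_eq CL_eq corr_def by (simp add: left_diff_distrib sum_subtractf)
    have corr_m[measurable]: "corr n \<in> borel_measurable M" for n unfolding corr_def by measurable
    have CL_m[measurable]: "CL n \<in> borel_measurable M" for n unfolding CL_def by measurable
    have corr_sq: "integrable M (\<lambda>\<omega>. (corr n \<omega>)\<^sup>2)"
      "expectation (\<lambda>\<omega>. (corr n \<omega>)\<^sup>2) = (\<Sum>k<K. \<Sum>i\<in>S n k. (gm n k i - rr n * Z.sgn_set (Ia n k) i)\<^sup>2) * s2" for n
      unfolding corr_def
      by (rule Z.sq_family(1)[OF _ _ Sdisj[of n]], auto intro: Sfin)
         (rule Z.sq_family(2)[OF _ _ Sdisj[of n]], auto intro: Sfin)
    have corr_sum: "(\<Sum>k<K. \<Sum>i\<in>S n k. (gm n k i - rr n * Z.sgn_set (Ia n k) i)\<^sup>2)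
        = (\<Sum>k<K. 2 * (real (card (Ia n k)) * (cn n * (1 - tau) / real (card (Ia n k)) - rr n)\<^sup>2))" for n
    proof (rule sum.cong[OF refl])
      fix k assume "k \<in> {..<K}" then have k: "k < K" by simp
      have "(gm n k i - rr n * Z.sgn_set (Ia n k) i)\<^sup>2 = (cn n * (1 - tau) / real (card (Ia n k)) - rr n)\<^sup>2" for i
      proof -
        have sq: "(x * s - r * s)\<^sup>2 = (x - r)\<^sup>2" if "s = 1 \<or> s = -1" for x r s :: real
          using that by (auto simp: power2_eq_square algebra_simps)
        have "Z.sgn_set (Ia n k) i = 1 \<or> Z.sgn_set (Ia n k) i = -1" by (simp add: Z.sgn_set_def)
        from sq[OF this, of "cn n * (1 - tau) / real (card (Ia n k))" "rr n"]
        show ?thesis unfolding gm_def by (simp add: ac_simps)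
      qed
      then have "(\<Sum>i\<in>S n k. (gm n k i - rr n * Z.sgn_set (Ia n k) i)\<^sup>2) = real (card (S n k)) * (cn n * (1 - tau) / real (card (Ia n k)) - rr n)\<^sup>2"
        by simp
      also have "card (S n k) = 2 * card (Ia n k)"
        unfolding S_def using card_Un_disjoint[OF fins(1)[OF k] fins(2)[OF k] IaIb[OF k]] split_ab k by simp
      finally show "(\<Sum>i\<in>S n k. (gm n k i - rr n * Z.sgn_set (Ia n k) i)\<^sup>2)
        = 2 * (real (card (Ia n k)) * (cn n * (1 - tau) / real (card (Ia n k)) - rr n)\<^sup>2)" by simp
    qed
    have limN: "(\<lambda>n. real (NN n) / real n) \<longlonglongrightarrow> real K * \<alpha>"
    proof -
      have "(\<lambda>n. \<Sum>k<K. real (card (Ia n k)) / real n) \<longlonglongrightarrow> (\<Sum>k<K. \<alpha>)"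
        by (intro tendsto_sum lima) simp
      moreover have "real (NN n) / real n = (\<Sum>k<K. real (card (Ia n k)) / real n)" for n
        unfolding NN_def cardA by (simp add: sum_divide_distrib)
      ultimately show ?thesis by simp
    qed
    have limk: "(\<lambda>n. real (card (Ia n k)) * (cn n * (1 - tau) / real (card (Ia n k)) - rr n)\<^sup>2) \<longlonglongrightarrow> 0"
      if k: "k < K" for k
    proof -
      have K': "real K > 0" using K0 by simp
      have "(\<lambda>n. real (card (Ia n k)) * (sqrt (real n / (2-tau)) * (1/real K) * (1-tau) / real (card (Ia n k))
             - sqrt (2 * (1-tau) * s2) / sqrt (2 * s2 * real (NN n)))\<^sup>2) \<longlonglongrightarrow> 0"
        by (rule lim_corr[OF K' tau(1) tau(2) s2pos lima[OF k, unfolded \<alpha>_def] limN[unfolded \<alpha>_def]]) auto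
      then show ?thesis by (simp add: cn_def rr_def v_def)
    qed
    have "oP M corr"
    proof (rule oP_L2[OF M corr_m])
      show "integrable M (\<lambda>x. (corr n x)\<^sup>2)" for n by (rule corr_sq(1))
      have "(\<lambda>n. (\<Sum>k<K. 2 * (real (card (Ia n k)) * (cn n * (1 - tau) / real (card (Ia n k)) - rr n)\<^sup>2)) * s2)
          \<longlonglongrightarrow> (\<Sum>k<K. 2 * 0) * s2"
        by (intro tendsto_intros limk) simp
      then show "(\<lambda>n. expectation (\<lambda>x. (corr n x)\<^sup>2)) \<longlonglongrightarrow> 0"
        by (simp add: corr_sq(2) corr_sum)
    qed
    then have Boo: "oP M (\<lambda>n \<omega>. corr n \<omega> + Rem n \<omega>)" by (rule oP_add[OF fmM _ Rem_oP])
    have "weak_conv_m (\<lambda>n. distr M borel (\<lambda>\<omega>. CL n \<omega> + (corr n \<omega> + Rem n \<omega>))) (gauss0 v)"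
      by (rule slutsky[OF CL_m CLT real_distribution_gauss0 Boo])
    moreover have "stat n = (\<lambda>\<omega>. CL n \<omega> + (corr n \<omega> + Rem n \<omega>))" for n
      using stat_fun corr_eq by (simp add: add.assoc)
    ultimately show ?thesis by (simp add: v_def)
  qed
  then show ?thesis unfolding stat_def s2_def \<mu>_def xi_def by simp
qed

end
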